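(* For every $\mathrm{LTL}$ formula $\psi$ over $AP$ there is a $\mathrm{coSafeLTL}$ formula $\psi'$ over $AP$ such that for every pointed $\Sigma$-tree $(t,u)$: $(t,u)\models\mathsf{E}^f\psi$ if and only if $(t,u)\models\mathsf{E}\psi'$.
   Context: Fix a finite set $AP$ and $\Sigma=2^{AP}$. A $\Sigma$-tree is an unranked (finitely many children per node), unordered, leafless (every node has a child) tree with labelling $t(v)\in\Sigma$. A path is a finite or infinite sequence of nodes, each (after the first) a child of the previous. $\mathrm{LTL}$ formulae: $\psi ::= p\mid\neg\psi\mid\psi\lor\psi\mid\mathsf{X}\psi\mid\psi\,\mathsf{U}\,\psi\mid\psi\,\mathsf{R}\,\psi$ with $p\in AP$. $\mathrm{coSafeLTL}$ is the set of $\mathrm{LTL}$ formulae in negation normal form (negation only in front of atomic propositions) using only the temporal operators $\mathsf{X}$ and $\mathsf{U}$. An $\mathrm{LTL}$ formula is evaluated on $(t,\pi,i)$, $\pi$ a path, $i$ a position of $\pi$: $p$ iff $p\in t(\pi(i))$; Booleans as usual; $\mathsf{X}\psi$ iff $i$ is not the last position of $\pi$ and $\psi$ holds at $i+1$; $\psi_1\mathsf{U}\psi_2$ iff some position $j\ge i$ of $\pi$ satisfies $\psi_2$ and all $k\in[i,j)$ satisfy $\psi_1$; $\psi_1\mathsf{R}\psi_2$ iff all positions $j\ge i$ satisfy $\psi_2$ or some $j\ge i$ satisfies $\psi_1\land\psi_2$ and all $k\in[i,j)$ satisfy $\psi_2$. $(t,u)\models\mathsf{E}^f\psi$ iff there is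 a finite path $\pi$ starting at the root of $t$ with $\pi(i)=u$ for some $i$ and $(t,\pi,i)\models\psi$. $(t,u)\models\mathsf{E}\psi'$ iff there is an infinite path $\pi$ starting at the root of $t$ with $\pi(i)=u$ for some $i$ and $(t,\pi,i)\models\psi'$. *)

theory Defs
  imports Main "HOL-Library.Extended_Nat"
begin

text \<open>LTL formulae over atomic propositions of type 'a. Conjunction is included as a
Boolean connective (needed for negation normal form).\<close>
datatype 'a ltl =
    Prop 'a
  | Neg "'a ltl"
  | Or "'a ltl" "'a ltl"
  | And "'a ltl" "'a ltl"
  | Next "'a ltl"
  | Until "'a ltl" "'a ltl"
  | Release "'a ltl" "'a ltl"

fun cosafe :: "'a ltl \<Rightarrow> bool" where
  "cosafe (Prop p) = True"
| "cosafe (Neg (Prop p)) = True"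
| "cosafe (Neg _) = False"
| "cosafe (Or a b) = (cosafe a \<and> cosafe b)"
| "cosafe (And a b) = (cosafe a \<and> cosafe b)"
| "cosafe (Next a) = cosafe a"
| "cosafe (Until a b) = (cosafe a \<and> cosafe b)"
| "cosafe (Release a b) = False"

text \<open>Trees are represented by tree domains: prefix-closed sets of nat lists, the
children of w being the elements w @ [k].\<close>
definition is_tree :: "nat list set \<Rightarrow> bool" where
  "is_tree D \<longleftrightarrow> [] \<in> D \<and> (\<forall>w k. w @ [k] \<in> D \<longrightarrow> w \<in> D)
     \<and> (\<forall>w\<in>D. finite {k. w @ [k] \<in> D} \<and> {k. w @ [k] \<in> D} \<noteq> {})"

text \<open>A path from the root of length len (positions i < len; len = \<infinity> for infinite paths).\<close>
definition root_path :: "nat list set \<Rightarrow> (nat \<Rightarrow> nat list) \<Rightarrow> enat \<Rightarrow> bool" where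
  "root_path D \<pi> len \<longleftrightarrow> len \<ge> 1 \<and> \<pi> 0 = [] \<and>
     (\<forall>i. enat i < len \<longrightarrow> \<pi> i \<in> D) \<and>
     (\<forall>i. enat (Suc i) < len \<longrightarrow> (\<exists>k. \<pi> (Suc i) = \<pi> i @ [k]))"

primrec holds :: "(nat list \<Rightarrow> 'a set) \<Rightarrow> (nat \<Rightarrow> nat list) \<Rightarrow> enat \<Rightarrow> 'a ltl \<Rightarrow> nat \<Rightarrow> bool" where
  "holds lab \<pi> len (Prop p) i = (p \<in> lab (\<pi> i))"
| "holds lab \<pi> len (Neg a) i = (\<not> holds lab \<pi> len a i)"
| "holds lab \<pi> len (Or a b) i = (holds lab \<pi> len a i \<or> holds lab \<pi> len b i)"
| "holds lab \<pi> len (And a b) i = (holds lab \<pi> len a i \<and> holds lab \<pi> len b i)"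
| "holds lab \<pi> len (Next a) i = (enat (Suc i) < len \<and> holds lab \<pi> len a (Suc i))"
| "holds lab \<pi> len (Until a b) i =
     (\<exists>j. i \<le> j \<and> enat j < len \<and> holds lab \<pi> len b j \<and> (\<forall>k. i \<le> k \<and> k < j \<longrightarrow> holds lab \<pi> len a k))"
| "holds lab \<pi> len (Release a b) i =
     ((\<forall>j. i \<le> j \<and> enat j < len \<longrightarrow> holds lab \<pi> len b j) \<or>
      (\<exists>j. i \<le> j \<and> enat j < len \<and> holds lab \<pi> len a j \<and> holds lab \<pi> len b j \<and>
           (\<forall>k. i \<le> k \<and> k < j \<longrightarrow> holds lab \<pi> len b k)))"

definition EF_sat :: "nat list set \<Rightarrow> (nat list \<Rightarrow> 'a set) \<Rightarrow> nat list \<Rightarrow> 'a ltl \<Rightarrow> bool" where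
  "EF_sat D lab u \<psi> \<longleftrightarrow> (\<exists>\<pi> (n::nat) i. root_path D \<pi> (enat n) \<and> i < n \<and> \<pi> i = u \<and>
                             holds lab \<pi> (enat n) \<psi> i)"

definition E_sat :: "nat list set \<Rightarrow> (nat list \<Rightarrow> 'a set) \<Rightarrow> nat list \<Rightarrow> 'a ltl \<Rightarrow> bool" where
  "E_sat D lab u \<psi> \<longleftrightarrow> (\<exists>\<pi> i. root_path D \<pi> \<infinity> \<and> \<pi> i = u \<and> holds lab \<pi> \<infinity> \<psi> i)"

end

theory Submission
  imports Defs
begin

primrec isem :: "(nat \<Rightarrow> 'a set) \<Rightarrow> 'a ltl \<Rightarrow> nat \<Rightarrow> bool" where
  "isem w (Prop p) i = (p \<in> w i)"
| "isem w (Neg a) i = (\<not> isem w a i)"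
| "isem w (Or a b) i = (isem w a i \<or> isem w b i)"
| "isem w (And a b) i = (isem w a i \<and> isem w b i)"
| "isem w (Next a) i = isem w a (Suc i)"
| "isem w (Until a b) i = (\<exists>j. i \<le> j \<and> isem w b j \<and> (\<forall>k. i \<le> k \<and> k < j \<longrightarrow> isem w a k))"
| "isem w (Release a b) i = ((\<forall>j. i \<le> j \<longrightarrow> isem w b j) \<or>
      (\<exists>j. i \<le> j \<and> isem w a j \<and> isem w b j \<and> (\<forall>k. i \<le> k \<and> k < j \<longrightarrow> isem w b k)))"

primrec fsem :: "(nat \<Rightarrow> 'a set) \<Rightarrow> nat \<Rightarrow> 'a ltl \<Rightarrow> nat \<Rightarrow> bool" where
  "fsem w m (Prop p) i = (p \<in> w i)"
| "fsem w m (Neg a) i = (\<not> fsem w m a i)"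
| "fsem w m (Or a b) i = (fsem w m a i \<or> fsem w m b i)"
| "fsem w m (And a b) i = (fsem w m a i \<and> fsem w m b i)"
| "fsem w m (Next a) i = (i < m \<and> fsem w m a (Suc i))"
| "fsem w m (Until a b) i = (\<exists>j. i \<le> j \<and> j \<le> m \<and> fsem w m b j \<and> (\<forall>k. i \<le> k \<and> k < j \<longrightarrow> fsem w m a k))"
| "fsem w m (Release a b) i = ((\<forall>j. i \<le> j \<and> j \<le> m \<longrightarrow> fsem w m b j) \<or>
      (\<exists>j. i \<le> j \<and> j \<le> m \<and> fsem w m a j \<and> fsem w m b j \<and> (\<forall>k. i \<le> k \<and> k < j \<longrightarrow> fsem w m b k)))"

lemma holds_inf: "holds lab \<pi> \<infinity> \<phi> i = isem (\<lambda>k. lab (\<pi> k)) \<phi> i"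
  by (induction \<phi> arbitrary: i) (simp_all)

lemma holds_fin: "holds lab \<pi> (enat (Suc m)) \<phi> i = fsem (\<lambda>k. lab (\<pi> k)) m \<phi> i"
  by (induction \<phi> arbitrary: i) (auto simp: less_Suc_eq_le)

lemma fsem_cong: "(\<And>k. i \<le> k \<Longrightarrow> k \<le> m \<Longrightarrow> w k = w' k) \<Longrightarrow> i \<le> m \<Longrightarrow> fsem w m \<phi> i = fsem w' m \<phi> i"
proof (induction \<phi> arbitrary: i)
  case (Next a)
  show ?case
  proof (cases "i < m")
    case True
    then have "fsem w m a (Suc i) = fsem w' m a (Suc i)" using Next by auto
    then show ?thesis by simp
  qed simp
next
  case (Until a b)
  have "\<And>j. i \<le> j \<Longrightarrow> j \<le> m \<Longrightarrow> fsem w m a j = fsem w' m a j \<and> fsem w m b j = fsem w' m b j"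
    using Until by auto
  then show ?case apply simp
    by (smt (verit, ccfv_SIG) dual_order.trans less_imp_le_nat)
next
  case (Release a b)
  have "\<And>j. i \<le> j \<Longrightarrow> j \<le> m \<Longrightarrow> fsem w m a j = fsem w' m a j \<and> fsem w m b j = fsem w' m b j"
    using Release by auto
  then show ?case apply simp
    by (smt (verit, ccfv_SIG) dual_order.trans less_imp_le_nat)
qed auto

definition tt :: "'a ltl" where "tt = Or (Prop undefined) (Neg (Prop undefined))"
definition ff :: "'a ltl" where "ff = And (Prop undefined) (Neg (Prop undefined))"

lemma isem_tt[simp]: "isem w tt i" and isem_ff[simp]: "\<not> isem w ff i"
  and cosafe_tt[simp]: "cosafe tt" and cosafe_ff[simp]: "cosafe ff"
  by (auto simp: tt_def ff_def)

fun okc :: "(nat \<Rightarrow> 'a set) \<Rightarrow> ('r \<times> 'a ltl \<times> 'a ltl) list \<Rightarrow> nat list \<Rightarrow> nat \<Rightarrow> bool" where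
  "okc w [] [] a = True"
| "okc w ((r,c,d)#T) (p#ps) a = (a \<le> p \<and> (\<forall>y. a \<le> y \<and> y < p \<longrightarrow> isem w c y) \<and> isem w d p \<and> okc w T ps (Suc p))"
| "okc w [] (p#ps) a = False"
| "okc w (s#T) [] a = False"

fun rd :: "('r \<times> 'b) list \<Rightarrow> nat list \<Rightarrow> nat \<Rightarrow> 'r" where
  "rd (s#T) (p#ps) z = (if z \<le> p \<or> T = [] then fst s else rd T ps z)"
| "rd [] ps z = undefined"
| "rd (s#T) [] z = undefined"

lemma okc_len: "okc w T ps a \<Longrightarrow> length ps = length T"
  by (induction w T ps a rule: okc.induct) auto

lemma okc_ge: "okc w T ps a \<Longrightarrow> p \<in> set ps \<Longrightarrow> a \<le> p"
  by (induction w T ps a rule: okc.induct) auto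

lemma okc_Nil_iff[simp]: "okc w [] ps a \<longleftrightarrow> ps = []"
  by (cases ps) auto

lemma okc_last_ge: "okc w T ps a \<Longrightarrow> T \<noteq> [] \<Longrightarrow> a \<le> last ps"
  using okc_ge okc_len by (metis last_in_set length_0_conv)

lemma okc_hd_le_last: "okc w T ps a \<Longrightarrow> T \<noteq> [] \<Longrightarrow> hd ps \<le> last ps"
proof (induction w T ps a rule: okc.induct)
  case (2 w r c d T p ps a)
  then show ?case using okc_last_ge[of w T ps "Suc p"] by (cases T) auto
qed auto

lemma okc_Cons_iff: "okc w (s#T) ps a \<longleftrightarrow> (\<exists>p ps'. ps = p#ps' \<and> a \<le> p \<and> (\<forall>y. a \<le> y \<and> y < p \<longrightarrow> isem w (fst (snd s)) y) \<and> isem w (snd (snd s)) p \<and> okc w T ps' (Suc p))"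
  by (cases s; cases ps) auto

lemma okc_append:
  "okc w (A @ B) ps a \<Longrightarrow> A \<noteq> [] \<Longrightarrow> \<exists>psA psB. ps = psA @ psB \<and> okc w A psA a \<and> okc w B psB (Suc (last psA))"
proof (induction A arbitrary: ps a)
  case (Cons s A)
  obtain r c d where s: "s = (r,c,d)" by (cases s)
  from Cons.prems obtain p ps' where ps: "ps = p # ps'" and h: "a \<le> p" "\<forall>y. a \<le> y \<and> y < p \<longrightarrow> isem w c y" "isem w d p"
    and rest: "okc w (A @ B) ps' (Suc p)" by (auto simp: s okc_Cons_iff)
  show ?case
  proof (cases "A = []")
    case True
    have "ps = [p] @ ps' \<and> okc w (s#A) [p] a \<and> okc w B ps' (Suc (last [p]))" using ps h rest s True by auto
    thus ?thesis by blast
  next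
    case False
    from Cons.IH[OF rest False] obtain psA psB where "ps' = psA @ psB" "okc w A psA (Suc p)" "okc w B psB (Suc (last psA))" by blast
    moreover have "psA \<noteq> []" using calculation okc_len[of w A psA] False by auto
    ultimately have "ps = (p#psA) @ psB \<and> okc w (s#A) (p#psA) a \<and> okc w B psB (Suc (last (p#psA)))"
      using ps h s by auto
    thus ?thesis by blast
  qed
qed simp

lemma okc_append2:
  "okc w A psA a \<Longrightarrow> okc w B psB (Suc (last psA)) \<Longrightarrow> A \<noteq> [] \<Longrightarrow> okc w (A @ B) (psA @ psB) a"
proof (induction w A psA a rule: okc.induct)
  case (2 w r c d T p ps a)
  show ?case
  proof (cases "T = []")
    case True thus ?thesis using 2 by auto
  next
    case False
    hence "ps \<noteq> []" using "2.prems" okc_len[of w T ps] by auto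
    hence "okc w (T @ B) (ps @ psB) (Suc p)" using 2 False by auto
    thus ?thesis using "2.prems" by auto
  qed
qed auto

lemma okc_last_append: "okc w A psA a \<Longrightarrow> okc w B psB b \<Longrightarrow> B \<noteq> [] \<Longrightarrow> last (psA @ psB) = last psB"
  using okc_len by (metis last_appendR length_0_conv)

lemma okc_start_mono: "okc w T ps a \<Longrightarrow> a \<le> a' \<Longrightarrow> (T \<noteq> [] \<Longrightarrow> a' \<le> hd ps) \<Longrightarrow> okc w T ps a'"
  by (cases "(w,T,ps,a)" rule: okc.cases) auto

lemma okc_start_ext: "okc w ((r,c,d)#T) ps a' \<Longrightarrow> a \<le> a' \<Longrightarrow> (\<forall>y. a \<le> y \<and> y < a' \<longrightarrow> isem w c y) \<Longrightarrow> okc w ((r,c,d)#T) ps a"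
  by (cases ps) (auto, meson leI le_trans)

lemma rd_extract:
  "okc w T ps a \<Longrightarrow> T \<noteq> [] \<Longrightarrow> a \<le> z \<Longrightarrow> z \<le> last ps \<Longrightarrow>
    \<exists>k < length T. fst (T!k) = rd T ps z \<and> (\<exists>ps'. okc w (drop k T) ps' z \<and> last ps' = last ps)"
proof (induction w T ps a rule: okc.induct)
  case (2 w r c d T p ps a)
  show ?case
  proof (cases "z \<le> p \<or> T = []")
    case True
    have "okc w ((r,c,d)#T) (p#ps) z" using 2 True
      by (cases T) (auto simp: okc_len)
    hence "fst (((r,c,d)#T)!0) = rd ((r,c,d)#T) (p#ps) z \<and> okc w (drop 0 ((r,c,d)#T)) (p#ps) z \<and> last (p#ps) = last (p#ps)"
      using True by auto
    thus ?thesis by blast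
  next
    case False
    hence "T \<noteq> []" "p < z" by auto
    hence "last (p#ps) = last ps" using "2.prems" okc_len[of w T ps] by auto
    with "2.IH" "2.prems" False obtain k ps' where "k < length T" "fst (T!k) = rd T ps z" "okc w (drop k T) ps' z" "last ps' = last ps"
      by fastforce
    thus ?thesis using False \<open>last (p#ps) = last ps\<close> by (intro exI[of _ "Suc k"]) auto
  qed
qed auto

fun chainf :: "('r \<times> 'a ltl \<times> 'a ltl) list \<Rightarrow> 'a ltl" where
  "chainf [] = ff"
| "chainf [(r,c,d)] = Until c d"
| "chainf ((r,c,d)#s#T) = Until c (And d (Next (chainf (s#T))))"

lemma chainf_sem: "T \<noteq> [] \<Longrightarrow> isem w (chainf T) z \<longleftrightarrow> (\<exists>ps. okc w T ps z)"
proof (induction T arbitrary: z rule: chainf.induct)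
  case (2 r c d)
  show ?case
  proof
    assume "isem w (chainf [(r, c, d)]) z"
    then obtain j where "z \<le> j" "isem w d j" "\<forall>k. z \<le> k \<and> k < j \<longrightarrow> isem w c k" by auto
    hence "okc w [(r, c, d)] [j] z" by auto
    thus "\<exists>ps. okc w [(r, c, d)] ps z" by blast
  next
    assume "\<exists>ps. okc w [(r, c, d)] ps z" thus "isem w (chainf [(r, c, d)]) z"
      by (auto simp: okc_Cons_iff)
  qed
next
  case (3 r c d s T)
  show ?case
  proof
    assume "isem w (chainf ((r, c, d) # s # T)) z"
    then obtain j where "z \<le> j" "isem w d j" "isem w (chainf (s#T)) (Suc j)" "\<forall>k. z \<le> k \<and> k < j \<longrightarrow> isem w c k" by auto
    with "3.IH" obtain ps where "okc w (s#T) ps (Suc j)" by auto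
    thus "\<exists>ps. okc w ((r, c, d) # s # T) ps z" using \<open>z \<le> j\<close> \<open>isem w d j\<close> \<open>\<forall>k. z \<le> k \<and> k < j \<longrightarrow> isem w c k\<close>
      by (intro exI[of _ "j#ps"]) auto
  next
    assume "\<exists>ps. okc w ((r, c, d) # s # T) ps z"
    then obtain j ps where "z \<le> j" "isem w d j" "okc w (s#T) ps (Suc j)" "\<forall>k. z \<le> k \<and> k < j \<longrightarrow> isem w c k"
      by (auto simp: okc_Cons_iff)
    with "3.IH" show "isem w (chainf ((r, c, d) # s # T)) z" by auto
  qed
qed simp

lemma cosafe_chainf: "(\<forall>(r,c,d)\<in>set T. cosafe c \<and> cosafe d) \<Longrightarrow> cosafe (chainf T)"
  by (induction T rule: chainf.induct) auto

type_synonym 'a tmpl = "('a ltl \<times> 'a ltl \<times> 'a ltl) list"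

definition sound :: "((nat \<Rightarrow> 'a set) \<Rightarrow> nat \<Rightarrow> nat \<Rightarrow> bool) \<Rightarrow> 'a tmpl \<Rightarrow> bool" where
  "sound R T \<longleftrightarrow> (\<forall>w z k ps. k < length T \<longrightarrow> okc w (drop k T) ps z \<longrightarrow> isem w (fst (T!k)) z \<longrightarrow> R w z (last ps))"

definition complete :: "((nat \<Rightarrow> 'a set) \<Rightarrow> nat \<Rightarrow> nat \<Rightarrow> bool) \<Rightarrow> 'a tmpl list \<Rightarrow> bool" where
  "complete R TT \<longleftrightarrow> (\<forall>w m. \<exists>T\<in>set TT. \<exists>ps. okc w T ps 0 \<and> last ps = m \<and> (\<forall>z \<le> m. R w z m \<longrightarrow> isem w (rd T ps z) z))"

definition wft :: "('r \<times> 'a ltl \<times> 'a ltl) list \<Rightarrow> ('r \<Rightarrow> bool) \<Rightarrow> bool" where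
  "wft T P \<longleftrightarrow> T \<noteq> [] \<and> (\<forall>(r,c,d)\<in>set T. P r \<and> cosafe c \<and> cosafe d)"

definition usr_ok :: "((nat \<Rightarrow> 'a set) \<Rightarrow> nat \<Rightarrow> nat \<Rightarrow> bool) \<Rightarrow> 'a tmpl list \<Rightarrow> bool" where
  "usr_ok R TT \<longleftrightarrow> (\<forall>T\<in>set TT. wft T cosafe \<and> sound R T) \<and> complete R TT"

definition ext_formula :: "'a tmpl list \<Rightarrow> 'a ltl" where
  "ext_formula TT = foldr Or (concat (map (\<lambda>T. map (\<lambda>k. And (fst (T!k)) (chainf (drop k T))) [0..<length T]) TT)) ff"

lemma isem_foldr_Or: "isem w (foldr Or xs ff) z \<longleftrightarrow> (\<exists>x\<in>set xs. isem w x z)"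
  by (induction xs) auto

lemma cosafe_foldr_Or: "(\<forall>x\<in>set xs. cosafe x) \<Longrightarrow> cosafe (foldr Or xs ff)"
  by (induction xs) auto

lemma ext_formula_cosafe: "usr_ok R TT \<Longrightarrow> cosafe (ext_formula TT)"
  unfolding ext_formula_def usr_ok_def wft_def
  apply (rule cosafe_foldr_Or)
  apply (auto dest!: in_set_dropD intro!: cosafe_chainf)
  by (metis (mono_tags, lifting) case_prodD nth_mem prod.collapse)

lemma ext_formula_sem: "usr_ok R TT \<Longrightarrow> isem w (ext_formula TT) z \<longleftrightarrow> (\<exists>m \<ge> z. R w z m)"
proof
  assume u: "usr_ok R TT" and "isem w (ext_formula TT) z"
  then obtain T k where T: "T \<in> set TT" "k < length T" "isem w (fst (T!k)) z" "isem w (chainf (drop k T)) z"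
    by (auto simp: ext_formula_def isem_foldr_Or)
  then obtain ps where ps: "okc w (drop k T) ps z" using chainf_sem[of "drop k T" w z] by auto
  have "R w z (last ps)" using u T ps by (auto simp: usr_ok_def sound_def)
  moreover have "z \<le> last ps" using okc_last_ge[OF ps] T by auto
  ultimately show "\<exists>m \<ge> z. R w z m" by auto
next
  assume u: "usr_ok R TT" and "\<exists>m \<ge> z. R w z m"
  then obtain m where m: "z \<le> m" "R w z m" by auto
  from u obtain T ps where T: "T \<in> set TT" "okc w T ps 0" "last ps = m" "\<forall>z \<le> m. R w z m \<longrightarrow> isem w (rd T ps z) z"
    unfolding usr_ok_def complete_def by blast
  have "T \<noteq> []" using u T by (auto simp: usr_ok_def wft_def)
  from rd_extract[OF T(2) \<open>T \<noteq> []\<close>, of z] m T obtain k ps' where k: "k < length T" "fst (T!k) = rd T ps z" "okc w (drop k T) ps' z"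
    by auto
  have "isem w (fst (T!k)) z" using k T m by auto
  moreover have "isem w (chainf (drop k T)) z" using chainf_sem[of "drop k T" w z] k by auto
  ultimately show "isem w (ext_formula TT) z" using T k
    by (auto simp: ext_formula_def isem_foldr_Or intro!: bexI[of _ T] bexI[of _ k])
qed

lemma usr_ok_cong: "usr_ok R TT \<Longrightarrow> (\<And>w z m. z \<le> m \<Longrightarrow> R w z m = R' w z m) \<Longrightarrow> usr_ok R' TT"
  unfolding usr_ok_def sound_def complete_def
  apply safe
    apply blast
   apply (metis drop_eq_Nil2 linorder_not_le okc_last_ge)
  by metis

lemma okc_strict: "okc w ((r,c,d)#T) (p#ps) a \<Longrightarrow> q \<in> set ps \<Longrightarrow> p < q"
  using okc_ge[of w T ps "Suc p" q] by auto

lemma sound_drop: "sound R T \<Longrightarrow> sound R (drop j T)"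
  unfolding sound_def
proof (intro allI impI)
  fix w z k ps
  assume a: "\<forall>w z k ps. k < length T \<longrightarrow> okc w (drop k T) ps z \<longrightarrow> isem w (fst (T ! k)) z \<longrightarrow> R w z (last ps)"
    and "k < length (drop j T)" "okc w (drop k (drop j T)) ps z" "isem w (fst (drop j T ! k)) z"
  hence "k + j < length T" "okc w (drop (k+j) T) ps z" "isem w (fst (T ! (k+j))) z"
    by (auto simp: add.commute)
  thus "R w z (last ps)" using a by blast
qed

lemma in_set_tl: "x \<in> set (tl T) \<Longrightarrow> x \<in> set T"
  by (cases T) auto

lemma rd_append1: "okc w T ps a \<Longrightarrow> T \<noteq> [] \<Longrightarrow> z \<le> last ps \<Longrightarrow> length Y = length X \<Longrightarrow> rd (T @ X) (ps @ Y) z = rd T ps z"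
proof (induction w T ps a rule: okc.induct)
  case (2 w r c d T p ps a)
  show ?case
  proof (cases "T = []")
    case True thus ?thesis using 2 by auto
  next
    case False
    hence "ps \<noteq> []" using 2 okc_len[of w T ps] by auto
    thus ?thesis using 2 False by auto
  qed
qed auto

lemma rd_append2: "okc w T ps a \<Longrightarrow> T \<noteq> [] \<Longrightarrow> last ps < z \<Longrightarrow> X \<noteq> [] \<Longrightarrow> rd (T @ X) (ps @ Y) z = rd X Y z"
proof (induction w T ps a rule: okc.induct)
  case (2 w r c d T p ps a)
  show ?case
  proof (cases "T = []")
    case True thus ?thesis using 2 by auto
  next
    case False
    hence "ps \<noteq> []" using 2 okc_len[of w T ps] by auto
    moreover have "p < last ps" using \<open>ps \<noteq> []\<close> okc_strict[of w r c d T p ps a "last ps"] "2.prems" by auto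
    ultimately show ?thesis using 2 False by auto
  qed
qed auto

lemma usr_lit: "cosafe \<phi> \<Longrightarrow> usr_ok (\<lambda>w z m. isem w \<phi> z) [[(\<phi>, tt, tt)]]"
  unfolding usr_ok_def sound_def complete_def wft_def
  by (auto simp: okc_Cons_iff)

definition shift :: "('a ltl \<times> 'a ltl \<times> 'a ltl) \<Rightarrow> ('a ltl \<times> 'a ltl \<times> 'a ltl)" where
  "shift s = (case s of (r,c,d) \<Rightarrow> (Next r, Next c, Next d))"

definition fin :: "bool \<Rightarrow> 'a ltl \<times> 'a ltl \<times> 'a ltl" where
  "fin weak = (if weak then tt else ff, ff, tt)"

definition nextT :: "bool \<Rightarrow> 'a tmpl \<Rightarrow> 'a tmpl list" where
  "nextT weak T = [map shift T @ [fin weak], map shift (tl T) @ [fin weak]]"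

definition nextU :: "bool \<Rightarrow> 'a tmpl list \<Rightarrow> 'a tmpl list" where
  "nextU weak TT = concat (map (nextT weak) TT)"

lemma okc_shift: "okc w (map shift T) ps a \<longleftrightarrow> okc w T (map Suc ps) (Suc a)"
proof (induction T arbitrary: ps a)
  case Nil then show ?case by simp
next
  case (Cons s T)
  obtain r c d where s: "s = (r,c,d)" by (cases s)
  show ?case
  proof (cases ps)
    case Nil then show ?thesis by (simp add: s shift_def)
  next
    case (Cons p ps')
    have "(\<forall>y. a \<le> y \<and> y < p \<longrightarrow> isem w c (Suc y)) \<longleftrightarrow> (\<forall>y. Suc a \<le> y \<and> y < Suc p \<longrightarrow> isem w c y)"
      by (metis Suc_le_D Suc_le_mono Suc_less_eq)
    then show ?thesis using Cons.IH by (simp add: s shift_def Cons)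
  qed
qed

lemma okc_fin: "okc w [fin weak] ps a \<longleftrightarrow> ps = [a]"
  apply (cases ps)
   apply (simp add: fin_def)
  apply (simp add: fin_def)
  by (metis le_antisym le_refl not_less)

lemma rd_shift: "okc w T ps a \<Longrightarrow> T \<noteq> [] \<Longrightarrow> (\<forall>p\<in>set ps. 1 \<le> p) \<Longrightarrow>
   rd (map shift T) (map (\<lambda>p. p - 1) ps) z = Next (rd T ps (Suc z))"
proof (induction w T ps a rule: okc.induct)
  case (2 w r c d T p ps a)
  show ?case
  proof (cases "T = []")
    case True thus ?thesis using 2 by (auto simp: shift_def)
  next
    case False
    hence "ps \<noteq> []" using 2 okc_len[of w T ps] by auto
    thus ?thesis using 2 False by (cases ps) (auto simp: shift_def)
  qed
qed auto

lemma map_Suc_pred: "(\<forall>p\<in>set ps. 1 \<le> p) \<Longrightarrow> map Suc (map (\<lambda>p. p - 1) ps) = ps"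
  by (induction ps) auto

lemma sound_nextT_aux:
  assumes s: "sound R T" and wt: "T' = map shift T @ [fin weak]"
  shows "sound (\<lambda>w z m. (z < m \<and> R w (Suc z) m) \<or> (weak \<and> z = m)) T'"
  unfolding sound_def
proof (intro allI impI)
  fix w z k ps
  assume k: "k < length T'" and ok: "okc w (drop k T') ps z" and fs: "isem w (fst (T'!k)) z"
  show "(z < last ps \<and> R w (Suc z) (last ps)) \<or> (weak \<and> z = last ps)"
  proof (cases "k < length T")
    case True
    have "drop k T' = map shift (drop k T) @ [fin weak]" using wt True by (simp add: drop_map)
    with ok obtain psA psB where ps: "ps = psA @ psB" and okA: "okc w (map shift (drop k T)) psA z"
      and okB: "okc w [fin weak] psB (Suc (last psA))"
      using okc_append[of w "map shift (drop k T)" "[fin weak]" ps z] True by auto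
    have psB: "psB = [Suc (last psA)]" using okB okc_fin by auto
    have "psA \<noteq> []" using okA okc_len[of w _ psA] True by fastforce
    have okA': "okc w (drop k T) (map Suc psA) (Suc z)" using okA okc_shift by auto
    have "fst (T'!k) = Next (fst (T!k))" using wt True by (auto simp: nth_append shift_def split: prod.splits)
    hence "isem w (fst (T!k)) (Suc z)" using fs by simp
    hence "R w (Suc z) (last (map Suc psA))" using s True okA' by (auto simp: sound_def)
    moreover have "last ps = Suc (last psA)" using ps psB by simp
    moreover have "z \<le> last psA" using okc_last_ge[OF okA] True by simp
    ultimately show ?thesis using \<open>psA \<noteq> []\<close> by (simp add: last_map)
  next
    case False
    hence "k = length T" using k wt by simp
    hence "drop k T' = [fin weak]" "fst (T'!k) = fst (fin weak)" using wt by (auto simp: nth_append)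
    thus ?thesis using ok fs okc_fin[of w weak ps z] by (auto simp: fin_def split: if_splits)
  qed
qed

lemma usr_next:
  assumes u: "usr_ok R TT"
  shows "usr_ok (\<lambda>w z m. (z < m \<and> R w (Suc z) m) \<or> (weak \<and> z = m)) (nextU weak TT)"
  unfolding usr_ok_def
proof (rule conjI)
  show "\<forall>T'\<in>set (nextU weak TT). wft T' cosafe \<and> sound (\<lambda>w z m. (z < m \<and> R w (Suc z) m) \<or> (weak \<and> z = m)) T'"
  proof
  fix T' assume "T' \<in> set (nextU weak TT)"
  then obtain T where T: "T \<in> set TT" and T': "T' = map shift T @ [fin weak] \<or> T' = map shift (tl T) @ [fin weak]"
    by (auto simp: nextU_def nextT_def)
  have sT: "sound R T" "wft T cosafe" using u T by (auto simp: usr_ok_def)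
  have wA: "wft (map shift T @ [fin weak]) cosafe" using sT(2) unfolding wft_def
    by (auto simp: shift_def fin_def split: prod.splits)
  have wB: "wft (map shift (tl T) @ [fin weak]) cosafe" using sT(2) unfolding wft_def
    by (cases T) (auto simp: shift_def fin_def split: prod.splits)
  have sA: "sound (\<lambda>w z m. (z < m \<and> R w (Suc z) m) \<or> (weak \<and> z = m)) (map shift T @ [fin weak])"
    by (rule sound_nextT_aux[OF sT(1)]) simp
  have dt: "drop 1 T = tl T" by (simp add: drop_Suc)
  have sB: "sound (\<lambda>w z m. (z < m \<and> R w (Suc z) m) \<or> (weak \<and> z = m)) (map shift (tl T) @ [fin weak])"
    by (rule sound_nextT_aux[OF sound_drop[OF sT(1), of 1]]) (simp add: drop_Suc)
  have "wft T' cosafe" using T' wA wB by auto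
  moreover have "sound (\<lambda>w z m. (z < m \<and> R w (Suc z) m) \<or> (weak \<and> z = m)) T'"
    using T' sA sB by auto
  ultimately show "wft T' cosafe \<and> sound (\<lambda>w z m. (z < m \<and> R w (Suc z) m) \<or> (weak \<and> z = m)) T'" ..
  qed
next
  show "complete (\<lambda>w z m. (z < m \<and> R w (Suc z) m) \<or> (weak \<and> z = m)) (nextU weak TT)"
    unfolding complete_def
  proof (intro allI)
    fix w m
    from u obtain T ps where T: "T \<in> set TT" "okc w T ps 0" "last ps = m" and cm: "\<forall>z \<le> m. R w z m \<longrightarrow> isem w (rd T ps z) z"
      unfolding usr_ok_def complete_def by blast
    have Tne: "T \<noteq> []" using u T by (auto simp: usr_ok_def wft_def)
    then obtain s T0 where Ts: "T = s # T0" by (cases T) auto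
    obtain p ps0 where pss: "ps = p # ps0" using T(2) Ts by (cases ps) auto
    obtain r c d where s: "s = (r,c,d)" by (cases s)
    show "\<exists>T'\<in>set (nextU weak TT). \<exists>ps'. okc w T' ps' 0 \<and> last ps' = m \<and>
       (\<forall>z\<le>m. (z < m \<and> R w (Suc z) m) \<or> (weak \<and> z = m) \<longrightarrow> isem w (rd T' ps' z) z)"
    proof (cases "p = 0 \<and> T0 = []")
      case True
      hence "m = 0" using T pss Ts s by auto
      have "map shift (tl T) @ [fin weak] = [fin weak]" using True Ts by simp
      moreover have "okc w [fin weak] [0] 0" by (simp add: okc_fin)
      moreover have "[fin weak] \<in> set (nextT weak T)" using True Ts by (simp add: nextT_def)
      ultimately show ?thesis using T(1) \<open>m = 0\<close>
        by (intro bexI[of _ "[fin weak]"] exI[of _ "[0]"]) (auto simp: nextU_def fin_def)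
    next
      case False
      define T1 where "T1 = (if p = 0 then T0 else T)"
      define ps1 where "ps1 = (if p = 0 then ps0 else ps)"
      have T1ne: "T1 \<noteq> []" using False Ts T1_def by auto
      have ok1: "okc w T1 ps1 1"
        using T(2) pss Ts s T1_def ps1_def okc_start_mono[of w T ps 0 1] by (auto split: if_splits)
      have ge1: "\<forall>q\<in>set ps1. 1 \<le> q" using okc_ge[OF ok1] by auto
      have last1: "last ps1 = m" using T pss Ts T1_def ps1_def ok1 T1ne okc_len[OF ok1] by (auto split: if_splits)
      have rd1: "\<And>z. 0 < z \<Longrightarrow> rd T ps z = rd T1 ps1 z" using T1_def ps1_def Ts pss False by auto
      define T' where "T' = map shift T1 @ [fin weak]"
      define ps' where "ps' = map (\<lambda>q. q - 1) ps1 @ [m]"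
      have T'in: "T' \<in> set (nextU weak TT)" using T(1) T'_def T1_def Ts
        by (auto simp: nextU_def nextT_def intro!: bexI[of _ T])
      have ps1ne: "ps1 \<noteq> []" using okc_len[OF ok1] T1ne by auto
      have okA: "okc w (map shift T1) (map (\<lambda>q. q - 1) ps1) 0"
        using okc_shift[of w T1 "map (\<lambda>q. q - 1) ps1" 0] map_Suc_pred[OF ge1] ok1 by simp
      have lastA: "last (map (\<lambda>q. q - 1) ps1) = m - 1" using ps1ne last1 by (simp add: last_map)
      have "m \<ge> 1" using ge1 last1 ps1ne by auto
      hence okB: "okc w [fin weak] [m] (Suc (last (map (\<lambda>q. q - 1) ps1)))" using lastA by (simp add: okc_fin)
      have ok': "okc w T' ps' 0" unfolding T'_def ps'_def
        using okc_append2[OF okA okB] T1ne by simp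
      have last': "last ps' = m" by (simp add: ps'_def)
      have cm': "\<forall>z\<le>m. (z < m \<and> R w (Suc z) m) \<or> (weak \<and> z = m) \<longrightarrow> isem w (rd T' ps' z) z"
      proof (intro allI impI)
        fix z assume zm: "z \<le> m" and Rz: "(z < m \<and> R w (Suc z) m) \<or> (weak \<and> z = m)"
        show "isem w (rd T' ps' z) z"
        proof (cases "z < m")
          case True
          hence "rd T' ps' z = rd (map shift T1) (map (\<lambda>q. q - 1) ps1) z"
            unfolding T'_def ps'_def using rd_append1[OF okA] T1ne lastA by simp
          also have "\<dots> = Next (rd T1 ps1 (Suc z))" using rd_shift[OF ok1 T1ne ge1] .
          finally have e: "rd T' ps' z = Next (rd T1 ps1 (Suc z))" .
          have "R w (Suc z) m" using Rz True by auto
          hence "isem w (rd T ps (Suc z)) (Suc z)" using cm True by (simp add: Suc_leI)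
          thus ?thesis using e rd1[of "Suc z"] by simp
        next
          case False
          hence "z = m" "weak" using zm Rz by auto
          hence "rd T' ps' z = rd [fin weak] [m] z"
            unfolding T'_def ps'_def using rd_append2[OF okA] T1ne lastA \<open>m \<ge> 1\<close> by simp
          thus ?thesis using \<open>weak\<close> by (simp add: fin_def)
        qed
      qed
      show ?thesis using T'in ok' last' cm' by blast
    qed
  qed
qed

fun merge :: "('r \<times> 'a ltl \<times> 'a ltl) list \<Rightarrow> ('s \<times> 'a ltl \<times> 'a ltl) list \<Rightarrow> (('r \<times> 's) \<times> 'a ltl \<times> 'a ltl) list list" where
  "merge ((r1,c1,d1)#xs) ((r2,c2,d2)#ys) = (if xs = [] \<and> ys = [] then [[((r1,r2), And c1 c2, And d1 d2)]] else
     (if xs \<noteq> [] then map (Cons ((r1,r2), And c1 c2, And d1 c2)) (merge xs ((r2,c2,d2)#ys)) else []) @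
     (if ys \<noteq> [] then map (Cons ((r1,r2), And c1 c2, And c1 d2)) (merge ((r1,c1,d1)#xs) ys) else []) @
     (if xs \<noteq> [] \<and> ys \<noteq> [] then map (Cons ((r1,r2), And c1 c2, And d1 d2)) (merge xs ys) else []))"
| "merge [] ys = []"
| "merge xs [] = []"

lemma merge_ne: "M \<in> set (merge T1 T2) \<Longrightarrow> M \<noteq> [] \<and> T1 \<noteq> [] \<and> T2 \<noteq> []"
  by (induction T1 T2 arbitrary: M rule: merge.induct) (auto split: if_splits)

lemma merge_hd: "M \<in> set (merge T1 T2) \<Longrightarrow> fst (hd M) = (fst (hd T1), fst (hd T2))"
  by (induction T1 T2 arbitrary: M rule: merge.induct) (auto split: if_splits)

lemma merge_drop: "M \<in> set (merge T1 T2) \<Longrightarrow> k < length M \<Longrightarrow>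
  \<exists>k1 < length T1. \<exists>k2 < length T2. drop k M \<in> set (merge (drop k1 T1) (drop k2 T2))"
proof (induction T1 T2 arbitrary: M k rule: merge.induct)
  case (1 r1 c1 d1 xs r2 c2 d2 ys)
  show ?case
  proof (cases k)
    case 0 thus ?thesis using "1.prems" by (intro exI[of _ 0]) auto
  next
    case (Suc k')
    show ?thesis
    proof (cases "xs = [] \<and> ys = []")
      case True thus ?thesis using "1.prems" Suc by auto
    next
      case False
      from "1.prems"(1) False consider
          (a) M' where "xs \<noteq> []" "M = ((r1,r2), And c1 c2, And d1 c2) # M'" "M' \<in> set (merge xs ((r2,c2,d2)#ys))"
        | (b) M' where "ys \<noteq> []" "M = ((r1,r2), And c1 c2, And c1 d2) # M'" "M' \<in> set (merge ((r1,c1,d1)#xs) ys)"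
        | (c) M' where "xs \<noteq> []" "ys \<noteq> []" "M = ((r1,r2), And c1 c2, And d1 d2) # M'" "M' \<in> set (merge xs ys)"
        by (auto split: if_splits)
      then show ?thesis
      proof cases
        case a
        with "1.IH"(1)[OF False a(1) a(3), of k'] "1.prems" Suc obtain k1 k2 where
          "k1 < length xs" "k2 < length ((r2,c2,d2)#ys)" "drop k' M' \<in> set (merge (drop k1 xs) (drop k2 ((r2,c2,d2)#ys)))" by auto
        thus ?thesis using a Suc by (intro exI[of _ "Suc k1"] exI[of _ k2]) auto
      next
        case b
        with "1.IH"(2)[OF False b(1) b(3), of k'] "1.prems" Suc obtain k1 k2 where
          "k1 < length ((r1,c1,d1)#xs)" "k2 < length ys" "drop k' M' \<in> set (merge (drop k1 ((r1,c1,d1)#xs)) (drop k2 ys))" by auto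
        thus ?thesis using b Suc by (intro exI[of _ k1] exI[of _ "Suc k2"]) auto
      next
        case c
        with "1.IH"(3)[OF False conjI[OF c(1) c(2)] c(4), of k'] "1.prems" Suc obtain k1 k2 where
          "k1 < length xs" "k2 < length ys" "drop k' M' \<in> set (merge (drop k1 xs) (drop k2 ys))" by auto
        thus ?thesis using c Suc by (intro exI[of _ "Suc k1"] exI[of _ "Suc k2"]) auto
      qed
    qed
  qed
qed auto

lemma okc_p_lt_last: "okc w (s#T) (p#ps) a \<Longrightarrow> T \<noteq> [] \<Longrightarrow> p < last ps"
  by (cases s) (metis last_in_set length_0_conv okc.simps(2) okc_len okc_strict)

lemma merge_proj: "M \<in> set (merge T1 T2) \<Longrightarrow> okc w M ps a \<Longrightarrow>
   \<exists>ps1 ps2. okc w T1 ps1 a \<and> okc w T2 ps2 a \<and> last ps1 = last ps \<and> last ps2 = last ps"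
proof (induction T1 T2 arbitrary: M ps a rule: merge.induct)
  case (1 r1 c1 d1 xs r2 c2 d2 ys)
  show ?case
  proof (cases "xs = [] \<and> ys = []")
    case True
    then obtain p where "ps = [p]" "a \<le> p" "\<forall>y. a \<le> y \<and> y < p \<longrightarrow> isem w c1 y \<and> isem w c2 y" "isem w d1 p" "isem w d2 p"
      using "1.prems" by (auto simp: okc_Cons_iff)
    thus ?thesis using True by (intro exI[of _ "[p]"]) auto
  next
    case False
    from "1.prems"(1) False consider
        (a) M' where "xs \<noteq> []" "M = ((r1,r2), And c1 c2, And d1 c2) # M'" "M' \<in> set (merge xs ((r2,c2,d2)#ys))"
      | (b) M' where "ys \<noteq> []" "M = ((r1,r2), And c1 c2, And c1 d2) # M'" "M' \<in> set (merge ((r1,c1,d1)#xs) ys)"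
      | (c) M' where "xs \<noteq> []" "ys \<noteq> []" "M = ((r1,r2), And c1 c2, And d1 d2) # M'" "M' \<in> set (merge xs ys)"
      by (auto split: if_splits)
    then show ?thesis
    proof cases
      case a
      then obtain p ps' where ps: "ps = p # ps'" "a \<le> p" "\<forall>y. a \<le> y \<and> y < p \<longrightarrow> isem w c1 y \<and> isem w c2 y"
          "isem w d1 p" "isem w c2 p" "okc w M' ps' (Suc p)"
        using "1.prems" by (auto simp: okc_Cons_iff)
      from "1.IH"(1)[OF False a(1) a(3) ps(6)] obtain ps1 ps2 where
        h: "okc w xs ps1 (Suc p)" "okc w ((r2,c2,d2)#ys) ps2 (Suc p)" "last ps1 = last ps'" "last ps2 = last ps'" by blast
      have "ps' \<noteq> []" using ps(6) merge_ne[OF a(3)] okc_len[of w M' ps'] by auto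
      have "ps1 \<noteq> []" using h(1) a(1) okc_len[of w xs ps1] by auto
      have o1: "okc w ((r1,c1,d1)#xs) (p#ps1) a" using ps h by auto
      have o2: "okc w ((r2,c2,d2)#ys) ps2 a"
        by (rule okc_start_ext[OF h(2)]) (use ps in \<open>auto simp: less_Suc_eq\<close>)
      show ?thesis using o1 o2 h \<open>ps' \<noteq> []\<close> \<open>ps1 \<noteq> []\<close> ps(1) by (intro exI[of _ "p#ps1"] exI[of _ ps2]) auto
    next
      case b
      then obtain p ps' where ps: "ps = p # ps'" "a \<le> p" "\<forall>y. a \<le> y \<and> y < p \<longrightarrow> isem w c1 y \<and> isem w c2 y"
          "isem w c1 p" "isem w d2 p" "okc w M' ps' (Suc p)"
        using "1.prems" by (auto simp: okc_Cons_iff)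
      from "1.IH"(2)[OF False b(1) b(3) ps(6)] obtain ps1 ps2 where
        h: "okc w ((r1,c1,d1)#xs) ps1 (Suc p)" "okc w ys ps2 (Suc p)" "last ps1 = last ps'" "last ps2 = last ps'" by blast
      have "ps' \<noteq> []" using ps(6) merge_ne[OF b(3)] okc_len[of w M' ps'] by auto
      have "ps2 \<noteq> []" using h(2) b(1) okc_len[of w ys ps2] by auto
      have o2: "okc w ((r2,c2,d2)#ys) (p#ps2) a" using ps h by auto
      have o1: "okc w ((r1,c1,d1)#xs) ps1 a"
        by (rule okc_start_ext[OF h(1)]) (use ps in \<open>auto simp: less_Suc_eq\<close>)
      show ?thesis using o1 o2 h \<open>ps' \<noteq> []\<close> \<open>ps2 \<noteq> []\<close> ps(1) by (intro exI[of _ ps1] exI[of _ "p#ps2"]) auto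
    next
      case c
      then obtain p ps' where ps: "ps = p # ps'" "a \<le> p" "\<forall>y. a \<le> y \<and> y < p \<longrightarrow> isem w c1 y \<and> isem w c2 y"
          "isem w d1 p" "isem w d2 p" "okc w M' ps' (Suc p)"
        using "1.prems" by (auto simp: okc_Cons_iff)
      from "1.IH"(3)[OF False conjI[OF c(1) c(2)] c(4) ps(6)] obtain ps1 ps2 where
        h: "okc w xs ps1 (Suc p)" "okc w ys ps2 (Suc p)" "last ps1 = last ps'" "last ps2 = last ps'" by blast
      have "ps' \<noteq> []" using ps(6) merge_ne[OF c(4)] okc_len[of w M' ps'] by auto
      have "ps1 \<noteq> []" using h(1) c(1) okc_len[of w xs ps1] by auto
      have "ps2 \<noteq> []" using h(2) c(2) okc_len[of w ys ps2] by auto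
      show ?thesis using ps h \<open>ps' \<noteq> []\<close> \<open>ps1 \<noteq> []\<close> \<open>ps2 \<noteq> []\<close> by (intro exI[of _ "p#ps1"] exI[of _ "p#ps2"]) auto
    qed
  qed
qed auto

lemma merge_exists: "okc w T1 ps1 a \<Longrightarrow> okc w T2 ps2 a \<Longrightarrow> T1 \<noteq> [] \<Longrightarrow> T2 \<noteq> [] \<Longrightarrow> last ps1 = last ps2 \<Longrightarrow>
  \<exists>M\<in>set (merge T1 T2). \<exists>ps. okc w M ps a \<and> last ps = last ps1 \<and>
      (\<forall>z. a \<le> z \<longrightarrow> z \<le> last ps \<longrightarrow> rd M ps z = (rd T1 ps1 z, rd T2 ps2 z))"
proof (induction T1 T2 arbitrary: ps1 ps2 a rule: merge.induct)
  case (1 r1 c1 d1 xs r2 c2 d2 ys)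
  obtain p1 ps1' where P1: "ps1 = p1 # ps1'" "a \<le> p1" "\<forall>y. a \<le> y \<and> y < p1 \<longrightarrow> isem w c1 y" "isem w d1 p1" "okc w xs ps1' (Suc p1)"
    using "1.prems"(1) by (auto simp: okc_Cons_iff)
  obtain p2 ps2' where P2: "ps2 = p2 # ps2'" "a \<le> p2" "\<forall>y. a \<le> y \<and> y < p2 \<longrightarrow> isem w c2 y" "isem w d2 p2" "okc w ys ps2' (Suc p2)"
    using "1.prems"(2) by (auto simp: okc_Cons_iff)
  have l1: "xs \<noteq> [] \<Longrightarrow> p1 < last ps1' \<and> last ps1 = last ps1'"
    using okc_p_lt_last[OF "1.prems"(1)[unfolded P1(1)]] okc_len[OF P1(5)] P1(1) by auto
  have l1': "xs = [] \<Longrightarrow> ps1' = [] \<and> last ps1 = p1" using P1 by auto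
  have l2: "ys \<noteq> [] \<Longrightarrow> p2 < last ps2' \<and> last ps2 = last ps2'"
    using okc_p_lt_last[OF "1.prems"(2)[unfolded P2(1)]] okc_len[OF P2(5)] P2(1) by auto
  have l2': "ys = [] \<Longrightarrow> ps2' = [] \<and> last ps2 = p2" using P2 by auto
  show ?case
  proof (cases "xs = [] \<and> ys = []")
    case True
    hence "p1 = p2" using l1' l2' "1.prems"(5) by auto
    define M where "M = [((r1,r2), And c1 c2, And d1 d2)]"
    have "M \<in> set (merge ((r1,c1,d1)#xs) ((r2,c2,d2)#ys))" using True M_def by simp
    moreover have "okc w M [p1] a" using P1 P2 \<open>p1 = p2\<close> M_def by auto
    moreover have "\<forall>z. rd M [p1] z = (rd ((r1,c1,d1)#xs) ps1 z, rd ((r2,c2,d2)#ys) ps2 z)"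
      using True P1 P2 M_def by auto
    ultimately show ?thesis using l1' True by (intro bexI[of _ M] exI[of _ "[p1]"]) auto
  next
    case False
    consider (lt) "p1 < p2" | (gt) "p2 < p1" | (eq) "p1 = p2" by linarith
    then show ?thesis
    proof cases
      case lt
      have xs: "xs \<noteq> []"
      proof
        assume "xs = []"
        hence "last ps2 = p1" using l1' "1.prems"(5) by auto
        moreover have "p2 \<le> last ps2" using okc_hd_le_last[OF "1.prems"(2)] P2 by auto
        ultimately show False using lt by auto
      qed
      have o2: "okc w ((r2,c2,d2)#ys) ps2 (Suc p1)"
        by (rule okc_start_mono[OF "1.prems"(2)]) (use P1 P2 lt in auto)
      from "1.IH"(1)[OF False xs P1(5) o2 xs] "1.prems"(5) l1[OF xs] obtain M' ps' where
        M': "M' \<in> set (merge xs ((r2,c2,d2)#ys))" "okc w M' ps' (Suc p1)" "last ps' = last ps1'"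
          "\<forall>z. Suc p1 \<le> z \<longrightarrow> z \<le> last ps' \<longrightarrow> rd M' ps' z = (rd xs ps1' z, rd ((r2,c2,d2)#ys) ps2 z)"
        by auto
      define M where "M = ((r1,r2), And c1 c2, And d1 c2) # M'"
      have "M \<in> set (merge ((r1,c1,d1)#xs) ((r2,c2,d2)#ys))" using M' xs False M_def by auto
      moreover have ok: "okc w M (p1#ps') a" using P1 P2 M' lt M_def by auto
      moreover have "ps' \<noteq> []" using M'(2) merge_ne[OF M'(1)] okc_len[of w M' ps'] by auto
      moreover have "\<forall>z. a \<le> z \<longrightarrow> z \<le> last (p1#ps') \<longrightarrow> rd M (p1#ps') z = (rd ((r1,c1,d1)#xs) ps1 z, rd ((r2,c2,d2)#ys) ps2 z)"
      proof (intro allI impI)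
        fix z assume z: "a \<le> z" "z \<le> last (p1#ps')"
        show "rd M (p1#ps') z = (rd ((r1,c1,d1)#xs) ps1 z, rd ((r2,c2,d2)#ys) ps2 z)"
        proof (cases "z \<le> p1")
          case True thus ?thesis using lt P1 P2 M_def by auto
        next
          case False
          thus ?thesis using M'(4) z \<open>ps' \<noteq> []\<close> merge_ne[OF M'(1)] M_def P1 xs by auto
        qed
      qed
      ultimately show ?thesis using M' l1[OF xs] by (intro bexI[of _ M] exI[of _ "p1#ps'"]) auto
    next
      case gt
      have ys: "ys \<noteq> []"
      proof
        assume "ys = []"
        hence "last ps1 = p2" using l2' "1.prems"(5) by auto
        moreover have "p1 \<le> last ps1" using okc_hd_le_last[OF "1.prems"(1)] P1 by auto
        ultimately show False using gt by auto
      qed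
      have o1: "okc w ((r1,c1,d1)#xs) ps1 (Suc p2)"
        by (rule okc_start_mono[OF "1.prems"(1)]) (use P1 P2 gt in auto)
      from "1.IH"(2)[OF False ys o1 P2(5) _ ys] "1.prems"(5) l2[OF ys] obtain M' ps' where
        M': "M' \<in> set (merge ((r1,c1,d1)#xs) ys)" "okc w M' ps' (Suc p2)" "last ps' = last ps1"
          "\<forall>z. Suc p2 \<le> z \<longrightarrow> z \<le> last ps' \<longrightarrow> rd M' ps' z = (rd ((r1,c1,d1)#xs) ps1 z, rd ys ps2' z)"
        by auto
      define M where "M = ((r1,r2), And c1 c2, And c1 d2) # M'"
      have "M \<in> set (merge ((r1,c1,d1)#xs) ((r2,c2,d2)#ys))" using M' ys False M_def by auto
      moreover have ok: "okc w M (p2#ps') a" using P1 P2 M' gt M_def by auto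
      moreover have "ps' \<noteq> []" using M'(2) merge_ne[OF M'(1)] okc_len[of w M' ps'] by auto
      moreover have "\<forall>z. a \<le> z \<longrightarrow> z \<le> last (p2#ps') \<longrightarrow> rd M (p2#ps') z = (rd ((r1,c1,d1)#xs) ps1 z, rd ((r2,c2,d2)#ys) ps2 z)"
      proof (intro allI impI)
        fix z assume z: "a \<le> z" "z \<le> last (p2#ps')"
        show "rd M (p2#ps') z = (rd ((r1,c1,d1)#xs) ps1 z, rd ((r2,c2,d2)#ys) ps2 z)"
        proof (cases "z \<le> p2")
          case True thus ?thesis using gt P1 P2 M_def by auto
        next
          case False
          thus ?thesis using M'(4) z \<open>ps' \<noteq> []\<close> merge_ne[OF M'(1)] M_def P2 ys by auto
        qed
      qed
      ultimately show ?thesis using M' by (intro bexI[of _ M] exI[of _ "p2#ps'"]) auto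
    next
      case eq
      have xs: "xs \<noteq> []" and ys: "ys \<noteq> []"
        using False l1 l1' l2 l2' "1.prems"(5) eq by (metis less_irrefl)+
      have o2: "okc w ys ps2' (Suc p1)" using P2(5) eq by simp
      have ll: "last ps1' = last ps2'" using l1[OF xs] l2[OF ys] "1.prems"(5) by simp
      from "1.IH"(3)[OF False conjI[OF xs ys] P1(5) o2 xs ys ll] obtain M' ps' where
        M': "M' \<in> set (merge xs ys)" "okc w M' ps' (Suc p1)" "last ps' = last ps1'"
          "\<forall>z. Suc p1 \<le> z \<longrightarrow> z \<le> last ps' \<longrightarrow> rd M' ps' z = (rd xs ps1' z, rd ys ps2' z)"
        using xs ys by auto
      define M where "M = ((r1,r2), And c1 c2, And d1 d2) # M'"
      have "M \<in> set (merge ((r1,c1,d1)#xs) ((r2,c2,d2)#ys))" using M' xs ys M_def by auto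
      moreover have ok: "okc w M (p1#ps') a" using P1 P2 M' eq M_def by auto
      moreover have "ps' \<noteq> []" using M'(2) merge_ne[OF M'(1)] okc_len[of w M' ps'] by auto
      moreover have "\<forall>z. a \<le> z \<longrightarrow> z \<le> last (p1#ps') \<longrightarrow> rd M (p1#ps') z = (rd ((r1,c1,d1)#xs) ps1 z, rd ((r2,c2,d2)#ys) ps2 z)"
      proof (intro allI impI)
        fix z assume z: "a \<le> z" "z \<le> last (p1#ps')"
        show "rd M (p1#ps') z = (rd ((r1,c1,d1)#xs) ps1 z, rd ((r2,c2,d2)#ys) ps2 z)"
        proof (cases "z \<le> p1")
          case True thus ?thesis using eq P1 P2 M_def by auto
        next
          case False
          thus ?thesis using M'(4) z \<open>ps' \<noteq> []\<close> merge_ne[OF M'(1)] M_def P1 P2 xs ys eq by auto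
        qed
      qed
      ultimately show ?thesis using M' l1[OF xs] by (intro bexI[of _ M] exI[of _ "p1#ps'"]) auto
    qed
  qed
qed auto

definition sound2 :: "((nat \<Rightarrow> 'a set) \<Rightarrow> nat \<Rightarrow> nat \<Rightarrow> bool) \<Rightarrow> ((nat \<Rightarrow> 'a set) \<Rightarrow> nat \<Rightarrow> nat \<Rightarrow> bool) \<Rightarrow>
    (('a ltl \<times> 'a ltl) \<times> 'a ltl \<times> 'a ltl) list \<Rightarrow> bool" where
  "sound2 R1 R2 M \<longleftrightarrow> (\<forall>w z k ps. k < length M \<longrightarrow> okc w (drop k M) ps z \<longrightarrow>
     (isem w (fst (fst (M!k))) z \<longrightarrow> R1 w z (last ps)) \<and> (isem w (snd (fst (M!k))) z \<longrightarrow> R2 w z (last ps)))"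

lemma merge_sound2: "sound R1 T1 \<Longrightarrow> sound R2 T2 \<Longrightarrow> M \<in> set (merge T1 T2) \<Longrightarrow> sound2 R1 R2 M"
  unfolding sound2_def
proof (intro allI impI)
  fix w z k ps
  assume s1: "sound R1 T1" and s2: "sound R2 T2" and M: "M \<in> set (merge T1 T2)" and k: "k < length M"
    and ok: "okc w (drop k M) ps z"
  from merge_drop[OF M k] obtain k1 k2 where kk: "k1 < length T1" "k2 < length T2"
    "drop k M \<in> set (merge (drop k1 T1) (drop k2 T2))" by blast
  have "fst (M!k) = fst (hd (drop k M))" using k by (simp add: hd_drop_conv_nth)
  also have "\<dots> = (fst (hd (drop k1 T1)), fst (hd (drop k2 T2)))" using merge_hd[OF kk(3)] .
  also have "\<dots> = (fst (T1!k1), fst (T2!k2))" using kk by (simp add: hd_drop_conv_nth)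
  finally have fM: "fst (M!k) = (fst (T1!k1), fst (T2!k2))" .
  from merge_proj[OF kk(3) ok] obtain ps1 ps2 where
    pp: "okc w (drop k1 T1) ps1 z" "okc w (drop k2 T2) ps2 z" "last ps1 = last ps" "last ps2 = last ps" by blast
  have "isem w (fst (T1!k1)) z \<Longrightarrow> R1 w z (last ps1)" using s1 kk pp unfolding sound_def by blast
  moreover have "isem w (fst (T2!k2)) z \<Longrightarrow> R2 w z (last ps2)" using s2 kk pp unfolding sound_def by blast
  ultimately show "(isem w (fst (fst (M!k))) z \<longrightarrow> R1 w z (last ps)) \<and> (isem w (snd (fst (M!k))) z \<longrightarrow> R2 w z (last ps))"
    using fM pp by auto
qed

definition mapdata :: "('r \<Rightarrow> 's) \<Rightarrow> ('r \<times> 'a ltl \<times> 'a ltl) list \<Rightarrow> ('s \<times> 'a ltl \<times> 'a ltl) list" where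
  "mapdata f M = map (\<lambda>(r,c,d). (f r, c, d)) M"

lemma okc_mapdata: "okc w (mapdata f M) ps a = okc w M ps a"
  unfolding mapdata_def
  by (induction w M ps a rule: okc.induct) auto

lemma rd_mapdata: "okc w M ps a \<Longrightarrow> M \<noteq> [] \<Longrightarrow> rd (mapdata f M) ps z = f (rd M ps z)"
proof (induction w M ps a rule: okc.induct)
  case (2 w r c d T p ps a)
  show ?case
  proof (cases "T = []")
    case True thus ?thesis by (simp add: mapdata_def)
  next
    case False
    hence "ps \<noteq> []" using 2 okc_len[of w T ps] by auto
    thus ?thesis using 2 False by (cases ps) (auto simp: mapdata_def)
  qed
qed auto

lemma merge_set: "M \<in> set (merge T1 T2) \<Longrightarrow> s \<in> set M \<Longrightarrow>
  \<exists>r1 c1 d1 r2 c2 d2. (r1,c1,d1) \<in> set T1 \<and> (r2,c2,d2) \<in> set T2 \<and> fst s = (r1,r2) \<and> fst (snd s) = And c1 c2 \<and>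
     snd (snd s) \<in> {And d1 d2, And d1 c2, And c1 d2}"
proof (induction T1 T2 arbitrary: M rule: merge.induct)
  case (1 r1 c1 d1 xs r2 c2 d2 ys)
  show ?case
  proof (cases "xs = [] \<and> ys = []")
    case True thus ?thesis using "1.prems" by auto
  next
    case False
    from "1.prems"(1) False consider
        (a) M' where "xs \<noteq> []" "M = ((r1,r2), And c1 c2, And d1 c2) # M'" "M' \<in> set (merge xs ((r2,c2,d2)#ys))"
      | (b) M' where "ys \<noteq> []" "M = ((r1,r2), And c1 c2, And c1 d2) # M'" "M' \<in> set (merge ((r1,c1,d1)#xs) ys)"
      | (c) M' where "xs \<noteq> []" "ys \<noteq> []" "M = ((r1,r2), And c1 c2, And d1 d2) # M'" "M' \<in> set (merge xs ys)"
      by (auto split: if_splits)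
    then show ?thesis
    proof cases
      case a
      show ?thesis
      proof (cases "s \<in> set M'")
        case True
        from "1.IH"(1)[OF False a(1) a(3) True] show ?thesis by fastforce
      next
        case False thus ?thesis using a "1.prems"(2) by fastforce
      qed
    next
      case b
      show ?thesis
      proof (cases "s \<in> set M'")
        case True
        from "1.IH"(2)[OF False b(1) b(3) True] show ?thesis by fastforce
      next
        case False thus ?thesis using b "1.prems"(2) by fastforce
      qed
    next
      case c
      show ?thesis
      proof (cases "s \<in> set M'")
        case True
        from "1.IH"(3)[OF False conjI[OF c(1) c(2)] c(4) True] show ?thesis by fastforce
      next
        case False thus ?thesis using c "1.prems"(2) by fastforce
      qed
    qed
  qed
qed auto

lemma merge_wft: "wft T1 P1 \<Longrightarrow> wft T2 P2 \<Longrightarrow> M \<in> set (merge T1 T2) \<Longrightarrow> wft M (\<lambda>(x,y). P1 x \<and> P2 y)"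
  unfolding wft_def
proof (intro conjI ballI)
  assume "T1 \<noteq> [] \<and> (\<forall>(r, c, d)\<in>set T1. P1 r \<and> cosafe c \<and> cosafe d)"
    "T2 \<noteq> [] \<and> (\<forall>(r, c, d)\<in>set T2. P2 r \<and> cosafe c \<and> cosafe d)" "M \<in> set (merge T1 T2)"
  note h = this
  show "M \<noteq> []" using merge_ne[OF h(3)] by simp
  fix s assume "s \<in> set M"
  from merge_set[OF h(3) this] h show "case s of (r, c, d) \<Rightarrow> (case r of (x, y) \<Rightarrow> P1 x \<and> P2 y) \<and> cosafe c \<and> cosafe d"
    by (cases s) fastforce
qed

definition combU :: "('a ltl \<Rightarrow> 'a ltl \<Rightarrow> 'a ltl) \<Rightarrow> 'a tmpl list \<Rightarrow> 'a tmpl list \<Rightarrow> 'a tmpl list" where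
  "combU f TT1 TT2 = [mapdata (\<lambda>(x,y). f x y) M. T1 \<leftarrow> TT1, T2 \<leftarrow> TT2, M \<leftarrow> merge T1 T2]"

lemma usr_comb:
  assumes u1: "usr_ok R1 TT1" and u2: "usr_ok R2 TT2"
    and cos: "\<And>x y. cosafe x \<Longrightarrow> cosafe y \<Longrightarrow> cosafe (f x y)"
    and snd: "\<And>w z m x y. (isem w x z \<longrightarrow> R1 w z m) \<Longrightarrow> (isem w y z \<longrightarrow> R2 w z m) \<Longrightarrow> isem w (f x y) z \<Longrightarrow> R w z m"
    and cmp: "\<And>w z m x y. (R1 w z m \<longrightarrow> isem w x z) \<Longrightarrow> (R2 w z m \<longrightarrow> isem w y z) \<Longrightarrow> R w z m \<Longrightarrow> isem w (f x y) z"
  shows "usr_ok R (combU f TT1 TT2)"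
  unfolding usr_ok_def combU_def
proof (rule conjI)
  show "\<forall>T\<in>set [mapdata (\<lambda>(x,y). f x y) M. T1 \<leftarrow> TT1, T2 \<leftarrow> TT2, M \<leftarrow> merge T1 T2]. wft T cosafe \<and> sound R T"
  proof
    fix T assume "T \<in> set [mapdata (\<lambda>(x,y). f x y) M. T1 \<leftarrow> TT1, T2 \<leftarrow> TT2, M \<leftarrow> merge T1 T2]"
    then obtain T1 T2 M where TM: "T1 \<in> set TT1" "T2 \<in> set TT2" "M \<in> set (merge T1 T2)" "T = mapdata (\<lambda>(x,y). f x y) M"
      by auto
    have w1: "wft T1 cosafe" "sound R1 T1" using u1 TM by (auto simp: usr_ok_def)
    have w2: "wft T2 cosafe" "sound R2 T2" using u2 TM by (auto simp: usr_ok_def)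
    have wM: "wft M (\<lambda>(x,y). cosafe x \<and> cosafe y)" using merge_wft[OF w1(1) w2(1) TM(3)] .
    have "wft T cosafe" using wM TM(4) cos unfolding wft_def mapdata_def by auto
    moreover have "sound R T" unfolding sound_def
    proof (intro allI impI)
      fix w z k ps assume k: "k < length T" and ok: "okc w (drop k T) ps z" and fs: "isem w (fst (T!k)) z"
      have kM: "k < length M" using k TM(4) by (simp add: mapdata_def)
      have "drop k T = mapdata (\<lambda>(x,y). f x y) (drop k M)" using TM(4) by (simp add: mapdata_def drop_map)
      hence okM: "okc w (drop k M) ps z" using ok okc_mapdata by metis
      obtain x y c d where Mk: "M!k = ((x,y),c,d)" by (metis prod.collapse)
      have "fst (T!k) = f x y" using TM(4) kM Mk by (simp add: mapdata_def)
      moreover have "(isem w x z \<longrightarrow> R1 w z (last ps)) \<and> (isem w y z \<longrightarrow> R2 w z (last ps))"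
        using merge_sound2[OF w1(2) w2(2) TM(3)] kM okM Mk unfolding sound2_def by fastforce
      ultimately show "R w z (last ps)" using snd fs by metis
    qed
    ultimately show "wft T cosafe \<and> sound R T" ..
  qed
next
  show "complete R [mapdata (\<lambda>(x,y). f x y) M. T1 \<leftarrow> TT1, T2 \<leftarrow> TT2, M \<leftarrow> merge T1 T2]"
    unfolding complete_def
  proof (intro allI)
    fix w m
    from u1 obtain T1 ps1 where A: "T1 \<in> set TT1" "okc w T1 ps1 0" "last ps1 = m" "\<forall>z \<le> m. R1 w z m \<longrightarrow> isem w (rd T1 ps1 z) z"
      unfolding usr_ok_def complete_def by blast
    from u2 obtain T2 ps2 where B: "T2 \<in> set TT2" "okc w T2 ps2 0" "last ps2 = m" "\<forall>z \<le> m. R2 w z m \<longrightarrow> isem w (rd T2 ps2 z) z"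
      unfolding usr_ok_def complete_def by blast
    have ne: "T1 \<noteq> []" "T2 \<noteq> []" using u1 u2 A B by (auto simp: usr_ok_def wft_def)
    from merge_exists[OF A(2) B(2) ne] A B obtain M ps where
      M: "M \<in> set (merge T1 T2)" "okc w M ps 0" "last ps = m" "\<forall>z. z \<le> last ps \<longrightarrow> rd M ps z = (rd T1 ps1 z, rd T2 ps2 z)"
      by auto
    define T where "T = mapdata (\<lambda>(x,y). f x y) M"
    have "T \<in> set [mapdata (\<lambda>(x,y). f x y) M. T1 \<leftarrow> TT1, T2 \<leftarrow> TT2, M \<leftarrow> merge T1 T2]"
      using A B M T_def by auto
    moreover have "okc w T ps 0" using M(2) okc_mapdata T_def by metis
    moreover have "\<forall>z \<le> m. R w z m \<longrightarrow> isem w (rd T ps z) z"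
    proof (intro allI impI)
      fix z assume z: "z \<le> m" "R w z m"
      have "rd T ps z = f (rd T1 ps1 z) (rd T2 ps2 z)"
        using rd_mapdata[OF M(2), of "\<lambda>(x,y). f x y" z] merge_ne[OF M(1)] M(3,4) z T_def by auto
      thus "isem w (rd T ps z) z" using cmp A(4) B(4) z by metis
    qed
    ultimately show "\<exists>T\<in>set [mapdata (\<lambda>(x,y). f x y) M. T1 \<leftarrow> TT1, T2 \<leftarrow> TT2, M \<leftarrow> merge T1 T2].
        \<exists>ps. okc w T ps 0 \<and> last ps = m \<and> (\<forall>z\<le>m. R w z m \<longrightarrow> isem w (rd T ps z) z)"
      using M(3) by blast
  qed
qed

definition andU :: "'a tmpl list \<Rightarrow> 'a tmpl list \<Rightarrow> 'a tmpl list" where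
  "andU = combU And"
definition orU :: "'a tmpl list \<Rightarrow> 'a tmpl list \<Rightarrow> 'a tmpl list" where
  "orU = combU Or"

lemma usr_and: assumes "usr_ok R1 TT1" "usr_ok R2 TT2" shows "usr_ok (\<lambda>w z m. R1 w z m \<and> R2 w z m) (andU TT1 TT2)"
  unfolding andU_def by (rule usr_comb[OF assms]) auto

lemma usr_or: assumes "usr_ok R1 TT1" "usr_ok R2 TT2" shows "usr_ok (\<lambda>w z m. R1 w z m \<or> R2 w z m) (orU TT1 TT2)"
  unfolding orU_def by (rule usr_comb[OF assms]) auto

definition gvars :: "bool \<Rightarrow> 'a ltl \<Rightarrow> 'a ltl \<Rightarrow> 'a ltl \<Rightarrow> 'a ltl \<Rightarrow> 'a tmpl list" where
  "gvars \<beta> \<delta> \<phi>1 c d = (let Tf = (if \<beta> then tt else ff) in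
     [[(Tf, And c \<phi>1, And (And d \<phi>1) \<delta>)], [(And ff c, c, c), (Tf, And c \<phi>1, And (And d \<phi>1) \<delta>)], [(And ff c, c, d)]])"

definition rvars :: "bool \<Rightarrow> 'a ltl \<Rightarrow> 'a ltl \<Rightarrow> 'a ltl \<Rightarrow> 'a ltl \<Rightarrow> 'a ltl \<Rightarrow> 'a tmpl list" where
  "rvars \<beta> \<delta> \<phi>1 \<phi>2 c d = gvars \<beta> \<delta> \<phi>1 c d @ [[(Until \<phi>1 \<phi>2, c, And d \<phi>2)]] @
     map (Cons (Until \<phi>1 \<phi>2, c, And c \<phi>2)) (gvars \<beta> \<delta> \<phi>1 c d)"

definition WU :: "bool \<Rightarrow> ((nat \<Rightarrow> 'a set) \<Rightarrow> nat \<Rightarrow> nat \<Rightarrow> bool) \<Rightarrow> ((nat \<Rightarrow> 'a set) \<Rightarrow> nat \<Rightarrow> nat \<Rightarrow> bool) \<Rightarrow> (nat \<Rightarrow> 'a set) \<Rightarrow> nat \<Rightarrow> nat \<Rightarrow> bool" where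
  "WU weak R1 R2 w z m \<longleftrightarrow> (\<exists>j. z \<le> j \<and> j \<le> m \<and> R2 w j m \<and> (\<forall>y. z \<le> y \<and> y < j \<longrightarrow> R1 w y m)) \<or>
      (weak \<and> (\<forall>y. z \<le> y \<and> y \<le> m \<longrightarrow> R1 w y m))"

lemma gvars_loc:
  assumes V: "V \<in> set (gvars \<beta> \<delta> \<phi>1 c d)" and k: "k < length V" and ok: "okc w (drop k V) psV z"
  shows "(\<forall>y. z \<le> y \<and> y < last psV \<longrightarrow> isem w c y) \<and> isem w d (last psV) \<and>
     (isem w (fst (V!k)) z \<longrightarrow> \<beta> \<and> (\<forall>y. z \<le> y \<and> y \<le> last psV \<longrightarrow> isem w \<phi>1 y) \<and> isem w \<delta> (last psV))"
proof -
  have G1: "okc w [(if \<beta> then tt else ff, And c \<phi>1, And (And d \<phi>1) \<delta>)] ps z' \<Longrightarrow>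
     (\<forall>y. z' \<le> y \<and> y < last ps \<longrightarrow> isem w c y) \<and> isem w d (last ps) \<and>
     (isem w (if \<beta> then tt else ff) z' \<longrightarrow> \<beta> \<and> (\<forall>y. z' \<le> y \<and> y \<le> last ps \<longrightarrow> isem w \<phi>1 y) \<and> isem w \<delta> (last ps))" for ps z'
    by (auto simp: okc_Cons_iff le_less)
  show ?thesis
  proof -
    from V consider (a) "V = [(if \<beta> then tt else ff, And c \<phi>1, And (And d \<phi>1) \<delta>)]"
      | (b) "V = [(And ff c, c, c), (if \<beta> then tt else ff, And c \<phi>1, And (And d \<phi>1) \<delta>)]"
      | (c) "V = [(And ff c, c, d)]"
      by (auto simp: gvars_def Let_def)
    then show ?thesis
    proof cases
      case a thus ?thesis using k ok G1 by auto
    next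
      case b
      show ?thesis
      proof (cases k)
        case 0
        from ok b 0 obtain l ps' where ps: "psV = l # ps'" "z \<le> l" "\<forall>y. z \<le> y \<and> y < l \<longrightarrow> isem w c y" "isem w c l"
            "okc w [(if \<beta> then tt else ff, And c \<phi>1, And (And d \<phi>1) \<delta>)] ps' (Suc l)"
          by (auto simp: okc_Cons_iff)
        have "ps' \<noteq> []" using ps(5) okc_len by fastforce
        have "last psV = last ps'" using ps \<open>ps' \<noteq> []\<close> by simp
        moreover have "Suc l \<le> last ps'" using okc_last_ge[OF ps(5)] by simp
        moreover have "\<forall>y. z \<le> y \<and> y < last ps' \<longrightarrow> isem w c y"
          using G1[OF ps(5)] ps(3,4) by (metis Suc_leI le_neq_implies_less not_le)
        ultimately show ?thesis using G1[OF ps(5)] b 0 by auto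
      next
        case (Suc k')
        hence "k' = 0" using k b by auto
        thus ?thesis using G1 ok b Suc by auto
      qed
    next
      case c thus ?thesis using k ok by (auto simp: okc_Cons_iff)
    qed
  qed
qed

lemma rvars_loc:
  assumes V: "V \<in> set (rvars \<beta> \<delta> \<phi>1 \<phi>2 c d)" and k: "k < length V" and ok: "okc w (drop k V) psV z"
  shows "(\<forall>y. z \<le> y \<and> y < last psV \<longrightarrow> isem w c y) \<and> isem w d (last psV) \<and>
     (isem w (fst (V!k)) z \<longrightarrow> ((\<exists>q. z \<le> q \<and> q \<le> last psV \<and> isem w \<phi>2 q) \<and> isem w (Until \<phi>1 \<phi>2) z) \<or>
        (\<beta> \<and> (\<forall>y. z \<le> y \<and> y \<le> last psV \<longrightarrow> isem w \<phi>1 y) \<and> isem w \<delta> (last psV)))"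
proof -
  from V consider (g) "V \<in> set (gvars \<beta> \<delta> \<phi>1 c d)" | (m) "V = [(Until \<phi>1 \<phi>2, c, And d \<phi>2)]"
    | (mg) G where "G \<in> set (gvars \<beta> \<delta> \<phi>1 c d)" "V = (Until \<phi>1 \<phi>2, c, And c \<phi>2) # G"
    by (auto simp: rvars_def)
  then show ?thesis
  proof cases
    case g thus ?thesis using gvars_loc[OF g k ok] by blast
  next
    case m thus ?thesis using k ok by (auto simp: okc_Cons_iff)
  next
    case mg
    show ?thesis
    proof (cases k)
      case 0
      from ok mg 0 obtain q ps' where ps: "psV = q # ps'" "z \<le> q" "\<forall>y. z \<le> y \<and> y < q \<longrightarrow> isem w c y" "isem w c q" "isem w \<phi>2 q"
          "okc w G ps' (Suc q)"
        by (auto simp: okc_Cons_iff)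
      have Gne: "G \<noteq> []" using mg(1) by (auto simp: gvars_def Let_def)
      have "ps' \<noteq> []" using ps(6) okc_len Gne by fastforce
      have lst: "last psV = last ps'" using ps \<open>ps' \<noteq> []\<close> by simp
      have ge: "Suc q \<le> last ps'" using okc_last_ge[OF ps(6) Gne] by simp
      have gl: "(\<forall>y. Suc q \<le> y \<and> y < last ps' \<longrightarrow> isem w c y) \<and> isem w d (last ps')"
        using gvars_loc[OF mg(1), of 0 w ps' "Suc q"] ps(6) Gne by auto
      have "\<forall>y. z \<le> y \<and> y < last psV \<longrightarrow> isem w c y"
        using gl ps(3,4) lst by (metis Suc_leI le_neq_implies_less not_le)
      moreover have "isem w (Until \<phi>1 \<phi>2) z" if "isem w (fst (V!k)) z" using that mg 0 by simp
      ultimately show ?thesis using gl lst ps ge by auto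
    next
      case (Suc k')
      have "k' < length G" "drop k V = drop k' G" "V!k = G!k'" using k mg Suc by auto
      thus ?thesis using gvars_loc[OF mg(1), of k' w psV z] ok by auto
    qed
  qed
qed

fun refine :: "bool \<Rightarrow> (('a ltl \<times> 'a ltl) \<times> 'a ltl \<times> 'a ltl) list \<Rightarrow> 'a tmpl list" where
  "refine weak [] = []"
| "refine weak [((\<phi>1,\<phi>2),c,d)] = rvars weak tt \<phi>1 \<phi>2 c d"
| "refine weak (((\<phi>1,\<phi>2),c,d) # s # rest) = concat (map (\<lambda>R'. map (\<lambda>V. V @ R')
      (rvars False tt \<phi>1 \<phi>2 c d @ rvars True (Next (fst (hd R'))) \<phi>1 \<phi>2 c d)) (refine weak (s # rest)))"

lemma gvars_ne: "V \<in> set (gvars \<beta> \<delta> \<phi>1 c d) \<Longrightarrow> V \<noteq> []"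
  by (auto simp: gvars_def Let_def)

lemma rvars_ne: "V \<in> set (rvars \<beta> \<delta> \<phi>1 \<phi>2 c d) \<Longrightarrow> V \<noteq> []"
  unfolding rvars_def using gvars_ne by fastforce

lemma refine_ne: "T' \<in> set (refine weak M) \<Longrightarrow> T' \<noteq> []"
  by (induction weak M arbitrary: T' rule: refine.induct) (auto dest: rvars_ne)

lemma refine_cases: "T' \<in> set (refine weak (((\<phi>1,\<phi>2),c,d) # s # rest)) \<Longrightarrow>
   (\<And>V R'. R' \<in> set (refine weak (s # rest)) \<Longrightarrow> T' = V @ R' \<Longrightarrow>
      V \<in> set (rvars False tt \<phi>1 \<phi>2 c d) \<or> V \<in> set (rvars True (Next (fst (hd R'))) \<phi>1 \<phi>2 c d) \<Longrightarrow> P) \<Longrightarrow> P"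
  by auto

lemma refine_proj: "T' \<in> set (refine weak M) \<Longrightarrow> okc w T' ps a \<Longrightarrow> \<exists>psM. okc w M psM a \<and> last psM = last ps"
proof (induction weak M arbitrary: T' ps a rule: refine.induct)
  case (2 weak \<phi>1 \<phi>2 c d)
  have V: "T' \<in> set (rvars weak tt \<phi>1 \<phi>2 c d)" using "2.prems" by simp
  have "0 < length T'" using rvars_ne[OF V] by simp
  from rvars_loc[OF V this, of w ps a] "2.prems"(2)
  have "(\<forall>y. a \<le> y \<and> y < last ps \<longrightarrow> isem w c y) \<and> isem w d (last ps)" by simp
  moreover have "a \<le> last ps" using okc_last_ge[OF "2.prems"(2)] rvars_ne[OF V] by simp
  ultimately have "okc w [((\<phi>1,\<phi>2),c,d)] [last ps] a \<and> last [last ps] = last ps" by simp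
  thus ?case by blast
next
  case (3 weak \<phi>1 \<phi>2 c d s rest)
  from "3.prems"(1) show ?case
  proof (rule refine_cases)
    fix V R' assume R': "R' \<in> set (refine weak (s # rest))" and T': "T' = V @ R'"
      and V: "V \<in> set (rvars False tt \<phi>1 \<phi>2 c d) \<or> V \<in> set (rvars True (Next (fst (hd R'))) \<phi>1 \<phi>2 c d)"
    have Vne: "V \<noteq> []" using V rvars_ne by blast
    from okc_append[of w V R' ps a] "3.prems"(2) T' Vne obtain psV psR where
      ps: "ps = psV @ psR" "okc w V psV a" "okc w R' psR (Suc (last psV))" by auto
    from "3.IH"[OF R' ps(3)] obtain psM where psM: "okc w (s#rest) psM (Suc (last psV))" "last psM = last psR" by blast
    have loc: "(\<forall>y. a \<le> y \<and> y < last psV \<longrightarrow> isem w c y) \<and> isem w d (last psV)"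
      using V rvars_loc[of V _ _ \<phi>1 \<phi>2 c d 0 w psV a] ps(2) Vne by auto
    have "a \<le> last psV" using okc_last_ge[OF ps(2) Vne] .
    hence "okc w (((\<phi>1,\<phi>2),c,d) # s # rest) (last psV # psM) a" using loc psM by simp
    moreover have "last (last psV # psM) = last ps"
    proof -
      have "psR \<noteq> []" using okc_len[OF ps(3)] refine_ne[OF R'] by auto
      moreover have "psM \<noteq> []" using okc_len[OF psM(1)] by auto
      ultimately show ?thesis using psM ps by simp
    qed
    ultimately show ?thesis by blast
  qed
qed simp

lemma sound2_drop: "sound2 R1 R2 M \<Longrightarrow> sound2 R1 R2 (drop j M)"
  unfolding sound2_def
proof (intro allI impI)
  fix w z k ps
  assume a: "\<forall>w z k ps. k < length M \<longrightarrow> okc w (drop k M) ps z \<longrightarrow>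
      (isem w (fst (fst (M ! k))) z \<longrightarrow> R1 w z (last ps)) \<and> (isem w (snd (fst (M ! k))) z \<longrightarrow> R2 w z (last ps))"
    and "k < length (drop j M)" "okc w (drop k (drop j M)) ps z"
  hence "k + j < length M" "okc w (drop (k+j) M) ps z" "drop j M ! k = M ! (k+j)"
    by (auto simp: add.commute)
  thus "(isem w (fst (fst (drop j M ! k))) z \<longrightarrow> R1 w z (last ps)) \<and> (isem w (snd (fst (drop j M ! k))) z \<longrightarrow> R2 w z (last ps))"
    using a by metis
qed

lemma WU_extend:
  assumes h: "\<forall>y. z \<le> y \<and> y \<le> b \<longrightarrow> R1 w y m" and u: "WU weak R1 R2 w (Suc b) m" and zb: "z \<le> b"
  shows "WU weak R1 R2 w z m"
proof -
  from u consider (a) j where "Suc b \<le> j" "j \<le> m" "R2 w j m" "\<forall>y. Suc b \<le> y \<and> y < j \<longrightarrow> R1 w y m"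
    | (b) "weak" "\<forall>y. Suc b \<le> y \<and> y \<le> m \<longrightarrow> R1 w y m"
    unfolding WU_def by blast
  then show ?thesis
  proof cases
    case a
    have "\<forall>y. z \<le> y \<and> y < j \<longrightarrow> R1 w y m"
    proof (intro allI impI)
      fix y assume y: "z \<le> y \<and> y < j"
      show "R1 w y m"
      proof (cases "y \<le> b")
        case True thus ?thesis using h y by blast
      next
        case False thus ?thesis using a(4) y by simp
      qed
    qed
    moreover have "z \<le> j" using a(1) zb by simp
    ultimately show ?thesis using a unfolding WU_def by blast
  next
    case b
    have "\<forall>y. z \<le> y \<and> y \<le> m \<longrightarrow> R1 w y m"
    proof (intro allI impI)
      fix y assume y: "z \<le> y \<and> y \<le> m"
      show "R1 w y m"
      proof (cases "y \<le> b")
        case True thus ?thesis using h y by blast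
      next
        case False thus ?thesis using b(2) y by simp
      qed
    qed
    thus ?thesis using b unfolding WU_def by blast
  qed
qed

lemma region_sound:
  assumes s2: "sound2 R1 R2 M" and M: "M = ((\<phi>1,\<phi>2),c,d) # rest"
    and okr: "okc w rest psr (Suc b)" and lastm: "last (b # psr) = m"
    and cb: "\<forall>y. z \<le> y \<and> y < b \<longrightarrow> isem w c y" and db: "isem w d b" and zb: "z \<le> b"
  shows "\<forall>y. z \<le> y \<and> y \<le> b \<longrightarrow> (isem w \<phi>1 y \<longrightarrow> R1 w y m) \<and> (isem w \<phi>2 y \<longrightarrow> R2 w y m)"
proof (intro allI impI)
  fix y assume y: "z \<le> y \<and> y \<le> b"
  have ok: "okc w (drop 0 M) (b # psr) y" using M okr cb db y by auto
  have l: "0 < length M" and f: "fst (M!0) = (\<phi>1,\<phi>2)" using M by auto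
  have "(isem w (fst (fst (M ! 0))) y \<longrightarrow> R1 w y (last (b # psr))) \<and> (isem w (snd (fst (M ! 0))) y \<longrightarrow> R2 w y (last (b # psr)))"
    using s2 l ok unfolding sound2_def by blast
  thus "(isem w \<phi>1 y \<longrightarrow> R1 w y m) \<and> (isem w \<phi>2 y \<longrightarrow> R2 w y m)" using f lastm by simp
qed

lemma until_sound:
  assumes h: "\<forall>y. z \<le> y \<and> y \<le> b \<longrightarrow> (isem w \<phi>1 y \<longrightarrow> Ra w y m) \<and> (isem w \<phi>2 y \<longrightarrow> Rb w y m)"
    and bm: "b \<le> m" and q: "z \<le> q" "q \<le> b" "isem w \<phi>2 q" and u: "isem w (Until \<phi>1 \<phi>2) z"
  shows "WU weak Ra Rb w z m"
proof -
  from u obtain j where j: "z \<le> j" "isem w \<phi>2 j" "\<forall>k. z \<le> k \<and> k < j \<longrightarrow> isem w \<phi>1 k" by auto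
  define j' where "j' = min j q"
  have "z \<le> j'" "j' \<le> b" "isem w \<phi>2 j'" "\<forall>k. z \<le> k \<and> k < j' \<longrightarrow> isem w \<phi>1 k"
    using j q by (auto simp: j'_def min_def)
  thus ?thesis using h bm unfolding WU_def by (intro disjI1 exI[of _ j']) auto
qed

lemma refine_sound: "sound2 R1 R2 M \<Longrightarrow> T' \<in> set (refine weak M) \<Longrightarrow> sound (WU weak R1 R2) T'"
proof (induction weak M arbitrary: T' rule: refine.induct)
  case (2 weak \<phi>1 \<phi>2 c d)
  have V: "T' \<in> set (rvars weak tt \<phi>1 \<phi>2 c d)" using "2.prems" by simp
  show ?case unfolding sound_def
  proof (intro allI impI)
    fix w z k ps assume k: "k < length T'" and ok: "okc w (drop k T') ps z" and fs: "isem w (fst (T'!k)) z"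
    define b where "b = last ps"
    from rvars_loc[OF V k ok] fs have loc: "(\<forall>y. z \<le> y \<and> y < b \<longrightarrow> isem w c y)" "isem w d b"
      "((\<exists>q. z \<le> q \<and> q \<le> b \<and> isem w \<phi>2 q) \<and> isem w (Until \<phi>1 \<phi>2) z) \<or>
        (weak \<and> (\<forall>y. z \<le> y \<and> y \<le> b \<longrightarrow> isem w \<phi>1 y) \<and> isem w tt b)"
      unfolding b_def by auto
    have zb: "z \<le> b" unfolding b_def using okc_last_ge[OF ok] k by simp
    have h: "\<forall>y. z \<le> y \<and> y \<le> b \<longrightarrow> (isem w \<phi>1 y \<longrightarrow> R1 w y b) \<and> (isem w \<phi>2 y \<longrightarrow> R2 w y b)"
      by (rule region_sound[OF "2.prems"(1) refl, of w "[]" b b z]) (use loc zb in auto)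
    from loc(3) show "WU weak R1 R2 w z (last ps)"
    proof
      assume "(\<exists>q. z \<le> q \<and> q \<le> b \<and> isem w \<phi>2 q) \<and> isem w (Until \<phi>1 \<phi>2) z"
      then obtain q where "z \<le> q" "q \<le> b" "isem w \<phi>2 q" "isem w (Until \<phi>1 \<phi>2) z" by blast
      from until_sound[where Ra=R1 and Rb=R2 and m=b and weak=weak, OF h order_refl this] show ?thesis unfolding b_def by simp
    next
      assume "weak \<and> (\<forall>y. z \<le> y \<and> y \<le> b \<longrightarrow> isem w \<phi>1 y) \<and> isem w tt b"
      thus ?thesis using h unfolding WU_def b_def by auto
    qed
  qed
next
  case (3 weak \<phi>1 \<phi>2 c d s rest)
  have s2r: "sound2 R1 R2 (s # rest)" using sound2_drop[OF "3.prems"(1), of 1] by simp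
  from "3.prems"(2) show ?case
  proof (rule refine_cases)
    fix V R' assume R': "R' \<in> set (refine weak (s # rest))" and T': "T' = V @ R'"
      and V: "V \<in> set (rvars False tt \<phi>1 \<phi>2 c d) \<or> V \<in> set (rvars True (Next (fst (hd R'))) \<phi>1 \<phi>2 c d)"
    have sR: "sound (WU weak R1 R2) R'" using "3.IH"[OF s2r R'] .
    have Vne: "V \<noteq> []" using V rvars_ne by blast
    have R'ne: "R' \<noteq> []" using refine_ne[OF R'] .
    show "sound (WU weak R1 R2) T'" unfolding sound_def
    proof (intro allI impI)
      fix w z k ps assume k: "k < length T'" and ok: "okc w (drop k T') ps z" and fs: "isem w (fst (T'!k)) z"
      show "WU weak R1 R2 w z (last ps)"
      proof (cases "k < length V")
        case False
        hence "drop k T' = drop (k - length V) R'" "T'!k = R'!(k - length V)" "k - length V < length R'"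
          using T' k by (auto simp: nth_append)
        thus ?thesis using sR ok fs unfolding sound_def by metis
      next
        case True
        have dk: "drop k T' = drop k V @ R'" using True T' by simp
        have dkne: "drop k V \<noteq> []" using True by simp
        from okc_append[of w "drop k V" R' ps z] ok dk dkne obtain psV psR where
          ps: "ps = psV @ psR" "okc w (drop k V) psV z" "okc w R' psR (Suc (last psV))" by auto
        define b where "b = last psV"
        have psRne: "psR \<noteq> []" using okc_len[OF ps(3)] R'ne by auto
        have lastps: "last ps = last psR" using ps(1) psRne by simp
        from refine_proj[OF R' ps(3)] obtain psM where psM: "okc w (s#rest) psM (Suc b)" "last psM = last psR"
          unfolding b_def by blast
        have psMne: "psM \<noteq> []" using okc_len[OF psM(1)] by auto
        define m where "m = last ps"
        have bm: "b < m" using okc_last_ge[OF psM(1)] psM(2) lastps unfolding m_def by simp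
        have zb: "z \<le> b" unfolding b_def using okc_last_ge[OF ps(2) dkne] .
        have fsV: "isem w (fst (V!k)) z" using fs T' True by (simp add: nth_append)
        have locs: "(\<forall>y. z \<le> y \<and> y < b \<longrightarrow> isem w c y) \<and> isem w d b \<and>
           (((\<exists>q. z \<le> q \<and> q \<le> b \<and> isem w \<phi>2 q) \<and> isem w (Until \<phi>1 \<phi>2) z) \<or>
            ((V \<in> set (rvars True (Next (fst (hd R'))) \<phi>1 \<phi>2 c d)) \<and> (\<forall>y. z \<le> y \<and> y \<le> b \<longrightarrow> isem w \<phi>1 y) \<and> isem w (fst (hd R')) (Suc b)))"
        proof (cases "V \<in> set (rvars False tt \<phi>1 \<phi>2 c d)")
          case True
          from rvars_loc[OF True \<open>k < length V\<close> ps(2)] fsV show ?thesis unfolding b_def by auto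
        next
          case False
          hence V2: "V \<in> set (rvars True (Next (fst (hd R'))) \<phi>1 \<phi>2 c d)" using V by simp
          from rvars_loc[OF V2 \<open>k < length V\<close> ps(2)] fsV V2 show ?thesis unfolding b_def by auto
        qed
        have h: "\<forall>y. z \<le> y \<and> y \<le> b \<longrightarrow> (isem w \<phi>1 y \<longrightarrow> R1 w y m) \<and> (isem w \<phi>2 y \<longrightarrow> R2 w y m)"
          by (rule region_sound[OF "3.prems"(1) refl psM(1)]) (use locs zb psM psMne lastps m_def in auto)
        from locs have "((\<exists>q. z \<le> q \<and> q \<le> b \<and> isem w \<phi>2 q) \<and> isem w (Until \<phi>1 \<phi>2) z) \<or>
            ((\<forall>y. z \<le> y \<and> y \<le> b \<longrightarrow> isem w \<phi>1 y) \<and> isem w (fst (hd R')) (Suc b))" by blast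
        thus ?thesis
        proof
          assume "(\<exists>q. z \<le> q \<and> q \<le> b \<and> isem w \<phi>2 q) \<and> isem w (Until \<phi>1 \<phi>2) z"
          then obtain q where "z \<le> q" "q \<le> b" "isem w \<phi>2 q" "isem w (Until \<phi>1 \<phi>2) z" by blast
          from until_sound[where Ra=R1 and Rb=R2 and m=m and weak=weak, OF h less_imp_le[OF bm] this] show ?thesis unfolding m_def by simp
        next
          assume a: "(\<forall>y. z \<le> y \<and> y \<le> b \<longrightarrow> isem w \<phi>1 y) \<and> isem w (fst (hd R')) (Suc b)"
          have "isem w (fst (R'!0)) (Suc b)" using a R'ne by (simp add: hd_conv_nth)
          hence "WU weak R1 R2 w (Suc b) (last psR)" using sR ps(3) R'ne unfolding sound_def b_def
            by (metis drop0 length_greater_0_conv)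
          hence "WU weak R1 R2 w (Suc b) m" using lastps m_def by simp
          moreover have "\<forall>y. z \<le> y \<and> y \<le> b \<longrightarrow> R1 w y m" using a h by blast
          ultimately show ?thesis using WU_extend zb unfolding m_def by blast
        qed
      qed
    qed
  qed
qed simp

lemma gvars_complete:
  assumes ab: "a \<le> b" and cb: "\<forall>y. a \<le> y \<and> y < b \<longrightarrow> isem w c y" and db: "isem w d b" and \<delta>b: "isem w \<delta> b"
    and P: "\<forall>z. a \<le> z \<and> z \<le> b \<longrightarrow> P z \<longrightarrow> \<beta> \<and> (\<forall>y. z \<le> y \<and> y \<le> b \<longrightarrow> isem w \<phi>1 y)"
  shows "\<exists>V\<in>set (gvars \<beta> \<delta> \<phi>1 c d). \<exists>psV. okc w V psV a \<and> last psV = b \<and>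
           (\<forall>z. a \<le> z \<and> z \<le> b \<longrightarrow> P z \<longrightarrow> isem w (rd V psV z) z)"
proof -
  define L where "L = {y. a \<le> y \<and> y \<le> b \<and> \<not> isem w \<phi>1 y}"
  have finL: "finite L" unfolding L_def by (rule finite_subset[of _ "{a..b}"]) auto
  show ?thesis
  proof (cases "L = {}")
    case True
    define V :: "'a tmpl" where "V = [(if \<beta> then tt else ff, And c \<phi>1, And (And d \<phi>1) \<delta>)]"
    have "V \<in> set (gvars \<beta> \<delta> \<phi>1 c d)" unfolding V_def gvars_def Let_def by simp
    moreover have "okc w V [b] a" using True ab cb db \<delta>b unfolding V_def L_def by auto
    moreover have "\<forall>z. a \<le> z \<and> z \<le> b \<longrightarrow> P z \<longrightarrow> isem w (rd V [b] z) z" using P unfolding V_def by auto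
    ultimately show ?thesis by (intro bexI[of _ V] exI[of _ "[b]"]) auto
  next
    case False
    define l where "l = Max L"
    have lL: "l \<in> L" using Max_in[OF finL False] l_def by simp
    have lmax: "\<And>y. y \<in> L \<Longrightarrow> y \<le> l" using Max_ge[OF finL] l_def by simp
    have l: "a \<le> l" "l \<le> b" "\<not> isem w \<phi>1 l" using lL unfolding L_def by auto
    have after: "\<And>y. l < y \<Longrightarrow> y \<le> b \<Longrightarrow> isem w \<phi>1 y"
    proof (rule ccontr)
      fix y assume y: "l < y" "y \<le> b" "\<not> isem w \<phi>1 y"
      hence "y \<in> L" using l unfolding L_def by auto
      thus False using lmax y by fastforce
    qed
    have noP: "\<And>z. a \<le> z \<Longrightarrow> z \<le> l \<Longrightarrow> \<not> P z"
    proof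
      fix z assume z: "a \<le> z" "z \<le> l" "P z"
      hence "\<forall>y. z \<le> y \<and> y \<le> b \<longrightarrow> isem w \<phi>1 y" using P l by auto
      thus False using z l by auto
    qed
    show ?thesis
    proof (cases "l = b")
      case True
      define V where "V = [(And ff c, c, d)]"
      have "V \<in> set (gvars \<beta> \<delta> \<phi>1 c d)" unfolding V_def gvars_def Let_def by simp
      moreover have "okc w V [b] a" using ab cb db unfolding V_def by auto
      moreover have "\<forall>z. a \<le> z \<and> z \<le> b \<longrightarrow> P z \<longrightarrow> isem w (rd V [b] z) z" using noP True by auto
      ultimately show ?thesis by (intro bexI[of _ V] exI[of _ "[b]"]) auto
    next
      case False
      hence lb: "l < b" using l by simp
      define V where "V = [(And ff c, c, c), (if \<beta> then tt else ff, And c \<phi>1, And (And d \<phi>1) \<delta>)]"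
      have "V \<in> set (gvars \<beta> \<delta> \<phi>1 c d)" unfolding V_def gvars_def Let_def by simp
      moreover have "okc w V [l, b] a" using l lb cb db \<delta>b after unfolding V_def by auto
      moreover have "\<forall>z. a \<le> z \<and> z \<le> b \<longrightarrow> P z \<longrightarrow> isem w (rd V [l, b] z) z"
      proof (intro allI impI)
        fix z assume z: "a \<le> z \<and> z \<le> b" and Pz: "P z"
        have "\<not> z \<le> l" using noP z Pz by auto
        thus "isem w (rd V [l, b] z) z" using P z Pz unfolding V_def by auto
      qed
      ultimately show ?thesis by (intro bexI[of _ V] exI[of _ "[l, b]"]) auto
    qed
  qed
qed

lemma rvars_complete:
  assumes ab: "a \<le> b" and cb: "\<forall>y. a \<le> y \<and> y < b \<longrightarrow> isem w c y" and db: "isem w d b" and \<delta>b: "isem w \<delta> b"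
    and H: "\<forall>z. a \<le> z \<and> z \<le> b \<longrightarrow> P z \<longrightarrow>
       (\<exists>j. z \<le> j \<and> j \<le> b \<and> isem w \<phi>2 j \<and> (\<forall>y. z \<le> y \<and> y < j \<longrightarrow> isem w \<phi>1 y)) \<or>
       (\<beta> \<and> (\<forall>y. z \<le> y \<and> y \<le> b \<longrightarrow> isem w \<phi>1 y))"
  shows "\<exists>V\<in>set (rvars \<beta> \<delta> \<phi>1 \<phi>2 c d). \<exists>psV. okc w V psV a \<and> last psV = b \<and>
           (\<forall>z. a \<le> z \<and> z \<le> b \<longrightarrow> P z \<longrightarrow> isem w (rd V psV z) z)"
proof -
  define Q where "Q = {j. a \<le> j \<and> j \<le> b \<and> isem w \<phi>2 j}"
  have finQ: "finite Q" unfolding Q_def by (rule finite_subset[of _ "{a..b}"]) auto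
  show ?thesis
  proof (cases "Q = {}")
    case True
    have "\<forall>z. a \<le> z \<and> z \<le> b \<longrightarrow> P z \<longrightarrow> \<beta> \<and> (\<forall>y. z \<le> y \<and> y \<le> b \<longrightarrow> isem w \<phi>1 y)"
    proof (intro allI impI)
      fix z assume z: "a \<le> z \<and> z \<le> b" and Pz: "P z"
      have "\<not> (\<exists>j. z \<le> j \<and> j \<le> b \<and> isem w \<phi>2 j)"
      proof
        assume "\<exists>j. z \<le> j \<and> j \<le> b \<and> isem w \<phi>2 j"
        then obtain j where "z \<le> j" "j \<le> b" "isem w \<phi>2 j" by blast
        hence "j \<in> Q" using z unfolding Q_def by auto
        thus False using True by simp
      qed
      thus "\<beta> \<and> (\<forall>y. z \<le> y \<and> y \<le> b \<longrightarrow> isem w \<phi>1 y)" using H z Pz by blast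
    qed
    from gvars_complete[OF ab cb db \<delta>b this] show ?thesis unfolding rvars_def by auto
  next
    case False
    define q where "q = Max Q"
    have qQ: "q \<in> Q" using Max_in[OF finQ False] q_def by simp
    have qmax: "\<And>y. y \<in> Q \<Longrightarrow> y \<le> q" using Max_ge[OF finQ] q_def by simp
    have q: "a \<le> q" "q \<le> b" "isem w \<phi>2 q" using qQ unfolding Q_def by auto
    have untilq: "\<And>z. a \<le> z \<Longrightarrow> z \<le> q \<Longrightarrow> P z \<Longrightarrow> isem w (Until \<phi>1 \<phi>2) z"
    proof -
      fix z assume z: "a \<le> z" "z \<le> q" "P z"
      have zb: "z \<le> b" using z q by simp
      from H z zb consider (j) j where "z \<le> j" "j \<le> b" "isem w \<phi>2 j" "\<forall>y. z \<le> y \<and> y < j \<longrightarrow> isem w \<phi>1 y"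
        | (g) "\<forall>y. z \<le> y \<and> y \<le> b \<longrightarrow> isem w \<phi>1 y" by blast
      then show "isem w (Until \<phi>1 \<phi>2) z"
      proof cases
        case j thus ?thesis by auto
      next
        case g thus ?thesis using q z by (intro isem.simps(6)[THEN iffD2] exI[of _ q]) auto
      qed
    qed
    show ?thesis
    proof (cases "q = b")
      case True
      define V where "V = [(Until \<phi>1 \<phi>2, c, And d \<phi>2)]"
      have "V \<in> set (rvars \<beta> \<delta> \<phi>1 \<phi>2 c d)" unfolding V_def rvars_def by simp
      moreover have "okc w V [b] a" using ab cb db q True unfolding V_def by auto
      moreover have "\<forall>z. a \<le> z \<and> z \<le> b \<longrightarrow> P z \<longrightarrow> isem w (rd V [b] z) z"
        using untilq True unfolding V_def by auto
      ultimately show ?thesis by (intro bexI[of _ V] exI[of _ "[b]"]) auto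
    next
      case False
      hence qb: "q < b" using q by simp
      have Pg: "\<forall>z. Suc q \<le> z \<and> z \<le> b \<longrightarrow> P z \<longrightarrow> \<beta> \<and> (\<forall>y. z \<le> y \<and> y \<le> b \<longrightarrow> isem w \<phi>1 y)"
      proof (intro allI impI)
        fix z assume z: "Suc q \<le> z \<and> z \<le> b" and Pz: "P z"
        have "\<not> (\<exists>j. z \<le> j \<and> j \<le> b \<and> isem w \<phi>2 j)"
        proof
          assume "\<exists>j. z \<le> j \<and> j \<le> b \<and> isem w \<phi>2 j"
          then obtain j where "z \<le> j" "j \<le> b" "isem w \<phi>2 j" by blast
          hence "j \<in> Q" using z q unfolding Q_def by auto
          thus False using qmax \<open>z \<le> j\<close> z by fastforce
        qed
        moreover have "a \<le> z" using z q by simp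
        ultimately show "\<beta> \<and> (\<forall>y. z \<le> y \<and> y \<le> b \<longrightarrow> isem w \<phi>1 y)" using H z Pz by blast
      qed
      have sqb: "Suc q \<le> b" using qb by simp
      have cb': "\<forall>y. Suc q \<le> y \<and> y < b \<longrightarrow> isem w c y" using cb q by auto
      from gvars_complete[OF sqb cb' db \<delta>b Pg] obtain G psG where
        G: "G \<in> set (gvars \<beta> \<delta> \<phi>1 c d)" "okc w G psG (Suc q)" "last psG = b"
           "\<forall>z. Suc q \<le> z \<and> z \<le> b \<longrightarrow> P z \<longrightarrow> isem w (rd G psG z) z"
        by blast
      have Gne: "G \<noteq> []" using gvars_ne[OF G(1)] .
      have psGne: "psG \<noteq> []" using okc_len[OF G(2)] Gne by auto
      define V where "V = (Until \<phi>1 \<phi>2, c, And c \<phi>2) # G"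
      have "V \<in> set (rvars \<beta> \<delta> \<phi>1 \<phi>2 c d)" unfolding V_def rvars_def using G(1) by simp
      moreover have "okc w V (q # psG) a" using q qb cb G(2) unfolding V_def by auto
      moreover have "last (q # psG) = b" using G(3) psGne by simp
      moreover have "\<forall>z. a \<le> z \<and> z \<le> b \<longrightarrow> P z \<longrightarrow> isem w (rd V (q # psG) z) z"
      proof (intro allI impI)
        fix z assume z: "a \<le> z \<and> z \<le> b" and Pz: "P z"
        show "isem w (rd V (q # psG) z) z"
        proof (cases "z \<le> q")
          case True thus ?thesis using untilq z Pz unfolding V_def by auto
        next
          case False thus ?thesis using G(4) z Pz Gne unfolding V_def by auto
        qed
      qed
      ultimately show ?thesis by blast
    qed
  qed
qed

lemma rd_hd: "okc w T ps a \<Longrightarrow> T \<noteq> [] \<Longrightarrow> z \<le> hd ps \<Longrightarrow> rd T ps z = fst (hd T)"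
  by (cases "(w,T,ps,a)" rule: okc.cases) auto

lemma refine_complete:
  "okc w M ps a \<Longrightarrow> M \<noteq> [] \<Longrightarrow> last ps = m \<Longrightarrow>
   (\<forall>z. a \<le> z \<and> z \<le> m \<longrightarrow> (Ra w z m \<longrightarrow> isem w (fst (rd M ps z)) z) \<and> (Rb w z m \<longrightarrow> isem w (snd (rd M ps z)) z)) \<Longrightarrow>
   \<exists>T'\<in>set (refine weak M). \<exists>ps'. okc w T' ps' a \<and> last ps' = m \<and>
      (\<forall>z. a \<le> z \<and> z \<le> m \<longrightarrow> WU weak Ra Rb w z m \<longrightarrow> isem w (rd T' ps' z) z)"
proof (induction weak M arbitrary: ps a rule: refine.induct)
  case (2 weak \<phi>1 \<phi>2 c d)
  from "2.prems"(1) obtain b where ps: "ps = [b]" "a \<le> b" "\<forall>y. a \<le> y \<and> y < b \<longrightarrow> isem w c y" "isem w d b"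
    by (auto simp: okc_Cons_iff)
  have bm: "b = m" using ps "2.prems"(3) by simp
  have fr: "\<And>z. a \<le> z \<Longrightarrow> z \<le> m \<Longrightarrow> (Ra w z m \<longrightarrow> isem w \<phi>1 z) \<and> (Rb w z m \<longrightarrow> isem w \<phi>2 z)"
    using "2.prems"(4) ps by auto
  have H: "\<forall>z. a \<le> z \<and> z \<le> b \<longrightarrow> WU weak Ra Rb w z m \<longrightarrow>
       (\<exists>j. z \<le> j \<and> j \<le> b \<and> isem w \<phi>2 j \<and> (\<forall>y. z \<le> y \<and> y < j \<longrightarrow> isem w \<phi>1 y)) \<or>
       (weak \<and> (\<forall>y. z \<le> y \<and> y \<le> b \<longrightarrow> isem w \<phi>1 y))"
  proof (intro allI impI)
    fix z assume z: "a \<le> z \<and> z \<le> b" and u: "WU weak Ra Rb w z m"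
    from u consider (j) j where "z \<le> j" "j \<le> m" "Rb w j m" "\<forall>y. z \<le> y \<and> y < j \<longrightarrow> Ra w y m"
      | (g) "weak" "\<forall>y. z \<le> y \<and> y \<le> m \<longrightarrow> Ra w y m" unfolding WU_def by blast
    then show "(\<exists>j. z \<le> j \<and> j \<le> b \<and> isem w \<phi>2 j \<and> (\<forall>y. z \<le> y \<and> y < j \<longrightarrow> isem w \<phi>1 y)) \<or>
       (weak \<and> (\<forall>y. z \<le> y \<and> y \<le> b \<longrightarrow> isem w \<phi>1 y))"
    proof cases
      case j
      have "isem w \<phi>2 j" using fr[of j] j z by auto
      moreover have "\<forall>y. z \<le> y \<and> y < j \<longrightarrow> isem w \<phi>1 y" using fr j z bm by auto
      ultimately show ?thesis using j bm by blast
    next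
      case g thus ?thesis using fr z bm by auto
    qed
  qed
  from rvars_complete[OF ps(2) ps(3) ps(4) isem_tt H] obtain V psV where
    V: "V \<in> set (rvars weak tt \<phi>1 \<phi>2 c d)" "okc w V psV a" "last psV = b"
       "\<forall>z. a \<le> z \<and> z \<le> b \<longrightarrow> WU weak Ra Rb w z m \<longrightarrow> isem w (rd V psV z) z" by blast
  thus ?case using bm by auto
next
  case (3 weak \<phi>1 \<phi>2 c d s rest)
  from "3.prems"(1) obtain b psr where ps: "ps = b # psr" "a \<le> b" "\<forall>y. a \<le> y \<and> y < b \<longrightarrow> isem w c y" "isem w d b"
      "okc w (s # rest) psr (Suc b)"
    by (auto simp: okc_Cons_iff)
  have psrne: "psr \<noteq> []" using okc_len[OF ps(5)] by auto
  have lastr: "last psr = m" using "3.prems"(3) ps psrne by simp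
  have bm: "b < m" using okc_last_ge[OF ps(5)] lastr by simp
  have fr: "\<And>z. a \<le> z \<Longrightarrow> z \<le> b \<Longrightarrow> (Ra w z m \<longrightarrow> isem w \<phi>1 z) \<and> (Rb w z m \<longrightarrow> isem w \<phi>2 z)"
    using "3.prems"(4) ps bm by auto
  have rdr: "\<And>z. Suc b \<le> z \<Longrightarrow> rd (((\<phi>1,\<phi>2),c,d) # s # rest) ps z = rd (s#rest) psr z"
    using ps by auto
  have frr: "\<forall>z. Suc b \<le> z \<and> z \<le> m \<longrightarrow> (Ra w z m \<longrightarrow> isem w (fst (rd (s#rest) psr z)) z) \<and> (Rb w z m \<longrightarrow> isem w (snd (rd (s#rest) psr z)) z)"
  proof (intro allI impI)
    fix z assume z: "Suc b \<le> z \<and> z \<le> m"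
    thus "(Ra w z m \<longrightarrow> isem w (fst (rd (s#rest) psr z)) z) \<and> (Rb w z m \<longrightarrow> isem w (snd (rd (s#rest) psr z)) z)"
    proof -
      have az: "a \<le> z" using z ps(2) by simp
      from "3.prems"(4) az z have "(Ra w z m \<longrightarrow> isem w (fst (rd (((\<phi>1,\<phi>2),c,d) # s # rest) ps z)) z) \<and>
          (Rb w z m \<longrightarrow> isem w (snd (rd (((\<phi>1,\<phi>2),c,d) # s # rest) ps z)) z)" by blast
      thus ?thesis using rdr[of z] z by simp
    qed
  qed
  from "3.IH"[OF ps(5) _ lastr frr] obtain R' psR where
    R': "R' \<in> set (refine weak (s # rest))" "okc w R' psR (Suc b)" "last psR = m"
        "\<forall>z. Suc b \<le> z \<and> z \<le> m \<longrightarrow> WU weak Ra Rb w z m \<longrightarrow> isem w (rd R' psR z) z" by blast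
  have R'ne: "R' \<noteq> []" using refine_ne[OF R'(1)] .
  define \<beta> where "\<beta> = WU weak Ra Rb w (Suc b) m"
  define \<delta> :: "'a ltl" where "\<delta> = (if \<beta> then Next (fst (hd R')) else tt)"
  have \<delta>b: "isem w \<delta> b"
  proof (cases \<beta>)
    case True
    have "isem w (rd R' psR (Suc b)) (Suc b)" using R'(4) True bm unfolding \<beta>_def by auto
    moreover have "rd R' psR (Suc b) = fst (hd R')"
      using rd_hd[OF R'(2) R'ne] okc_ge[OF R'(2)] okc_len[OF R'(2)] R'ne
      by (metis hd_in_set length_0_conv)
    ultimately show ?thesis using True unfolding \<delta>_def by simp
  qed (simp add: \<delta>_def)
  have H: "\<forall>z. a \<le> z \<and> z \<le> b \<longrightarrow> WU weak Ra Rb w z m \<longrightarrow>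
       (\<exists>j. z \<le> j \<and> j \<le> b \<and> isem w \<phi>2 j \<and> (\<forall>y. z \<le> y \<and> y < j \<longrightarrow> isem w \<phi>1 y)) \<or>
       (\<beta> \<and> (\<forall>y. z \<le> y \<and> y \<le> b \<longrightarrow> isem w \<phi>1 y))"
  proof (intro allI impI)
    fix z assume z: "a \<le> z \<and> z \<le> b" and u: "WU weak Ra Rb w z m"
    from u consider (j) j where "z \<le> j" "j \<le> m" "Rb w j m" "\<forall>y. z \<le> y \<and> y < j \<longrightarrow> Ra w y m"
      | (g) "weak" "\<forall>y. z \<le> y \<and> y \<le> m \<longrightarrow> Ra w y m" unfolding WU_def by blast
    then show "(\<exists>j. z \<le> j \<and> j \<le> b \<and> isem w \<phi>2 j \<and> (\<forall>y. z \<le> y \<and> y < j \<longrightarrow> isem w \<phi>1 y)) \<or>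
       (\<beta> \<and> (\<forall>y. z \<le> y \<and> y \<le> b \<longrightarrow> isem w \<phi>1 y))"
    proof cases
      case j
      show ?thesis
      proof (cases "j \<le> b")
        case True
        have "isem w \<phi>2 j" using fr[of j] j z True by auto
        moreover have "\<forall>y. z \<le> y \<and> y < j \<longrightarrow> isem w \<phi>1 y" using fr j z True by auto
        ultimately show ?thesis using j True by blast
      next
        case False
        have "\<forall>y. z \<le> y \<and> y \<le> b \<longrightarrow> isem w \<phi>1 y" using fr j z False by auto
        moreover have \<beta> unfolding \<beta>_def WU_def using j False z by (intro disjI1 exI[of _ j]) auto
        ultimately show ?thesis by blast
      qed
    next
      case g
      have "\<forall>y. z \<le> y \<and> y \<le> b \<longrightarrow> isem w \<phi>1 y" using fr g z bm by auto
      moreover have \<beta> unfolding \<beta>_def WU_def using g z by (intro disjI2) auto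
      ultimately show ?thesis by blast
    qed
  qed
  from rvars_complete[OF ps(2) ps(3) ps(4) \<delta>b H] obtain V psV where
    V: "V \<in> set (rvars \<beta> \<delta> \<phi>1 \<phi>2 c d)" "okc w V psV a" "last psV = b"
       "\<forall>z. a \<le> z \<and> z \<le> b \<longrightarrow> WU weak Ra Rb w z m \<longrightarrow> isem w (rd V psV z) z" by blast
  have Vne: "V \<noteq> []" using rvars_ne[OF V(1)] .
  have Vin: "V \<in> set (rvars False tt \<phi>1 \<phi>2 c d @ rvars True (Next (fst (hd R'))) \<phi>1 \<phi>2 c d)"
    using V(1) unfolding \<delta>_def by (cases \<beta>) auto
  have T'in: "V @ R' \<in> set (refine weak (((\<phi>1,\<phi>2),c,d) # s # rest))" using Vin R'(1) by auto
  have ok': "okc w (V @ R') (psV @ psR) a" using okc_append2[OF V(2)] R'(2) V(3) Vne by simp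
  have psRne: "psR \<noteq> []" using okc_len[OF R'(2)] R'ne by auto
  have last': "last (psV @ psR) = m" using R'(3) psRne by simp
  have cm: "\<forall>z. a \<le> z \<and> z \<le> m \<longrightarrow> WU weak Ra Rb w z m \<longrightarrow> isem w (rd (V @ R') (psV @ psR) z) z"
  proof (intro allI impI)
    fix z assume z: "a \<le> z \<and> z \<le> m" and u: "WU weak Ra Rb w z m"
    show "isem w (rd (V @ R') (psV @ psR) z) z"
    proof (cases "z \<le> b")
      case True
      hence "rd (V @ R') (psV @ psR) z = rd V psV z"
        using rd_append1[OF V(2) Vne] V(3) okc_len[OF R'(2)] by simp
      thus ?thesis using V(4) z u True by simp
    next
      case False
      hence "rd (V @ R') (psV @ psR) z = rd R' psR z"
        using rd_append2[OF V(2) Vne] V(3) R'ne by simp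
      thus ?thesis using R'(4) z u False by simp
    qed
  qed
  show ?case using T'in ok' last' cm by blast
qed simp

lemma rvars_wft: "cosafe \<phi>1 \<Longrightarrow> cosafe \<phi>2 \<Longrightarrow> cosafe c \<Longrightarrow> cosafe d \<Longrightarrow> cosafe \<delta> \<Longrightarrow>
   V \<in> set (rvars \<beta> \<delta> \<phi>1 \<phi>2 c d) \<Longrightarrow> wft V cosafe"
  unfolding rvars_def gvars_def Let_def wft_def by auto

lemma refine_wft: "wft M (\<lambda>(x,y). cosafe x \<and> cosafe y) \<Longrightarrow> T' \<in> set (refine weak M) \<Longrightarrow> wft T' cosafe"
proof (induction weak M arbitrary: T' rule: refine.induct)
  case (2 weak \<phi>1 \<phi>2 c d)
  thus ?case using rvars_wft[of \<phi>1 \<phi>2 c d tt T' weak] by (auto simp: wft_def)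
next
  case (3 weak \<phi>1 \<phi>2 c d s rest)
  from "3.prems"(2) show ?case
  proof (rule refine_cases)
    fix V R' assume R': "R' \<in> set (refine weak (s # rest))" and T': "T' = V @ R'"
      and V: "V \<in> set (rvars False tt \<phi>1 \<phi>2 c d) \<or> V \<in> set (rvars True (Next (fst (hd R'))) \<phi>1 \<phi>2 c d)"
    have wr: "wft (s # rest) (\<lambda>(x,y). cosafe x \<and> cosafe y)" using "3.prems"(1) by (auto simp: wft_def)
    have wR: "wft R' cosafe" using "3.IH"[OF wr R'] .
    have h: "cosafe \<phi>1" "cosafe \<phi>2" "cosafe c" "cosafe d" using "3.prems"(1) by (auto simp: wft_def)
    have "cosafe (fst (hd R'))" using wR unfolding wft_def by (metis (mono_tags, lifting) case_prodD hd_in_set prod.collapse)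
    hence "wft V cosafe"
    proof -
      assume c: "cosafe (fst (hd R'))"
      from V show ?thesis
      proof
        assume "V \<in> set (rvars False tt \<phi>1 \<phi>2 c d)"
        thus ?thesis using rvars_wft[OF h cosafe_tt] by blast
      next
        assume "V \<in> set (rvars True (Next (fst (hd R'))) \<phi>1 \<phi>2 c d)"
        moreover have "cosafe (Next (fst (hd R')))" using c by simp
        ultimately show ?thesis using rvars_wft[OF h] by blast
      qed
    qed
    thus "wft T' cosafe" using wR T' unfolding wft_def by auto
  qed
qed simp

definition wuU :: "bool \<Rightarrow> 'a tmpl list \<Rightarrow> 'a tmpl list \<Rightarrow> 'a tmpl list" where
  "wuU weak TT1 TT2 = [T'. T1 \<leftarrow> TT1, T2 \<leftarrow> TT2, M \<leftarrow> merge T1 T2, T' \<leftarrow> refine weak M]"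

lemma usr_wu:
  assumes u1: "usr_ok R1 TT1" and u2: "usr_ok R2 TT2"
  shows "usr_ok (WU weak R1 R2) (wuU weak TT1 TT2)"
  unfolding usr_ok_def
proof (rule conjI)
  show "\<forall>T\<in>set (wuU weak TT1 TT2). wft T cosafe \<and> sound (WU weak R1 R2) T"
  proof
    fix T assume "T \<in> set (wuU weak TT1 TT2)"
    then obtain T1 T2 M where TM: "T1 \<in> set TT1" "T2 \<in> set TT2" "M \<in> set (merge T1 T2)" "T \<in> set (refine weak M)"
      by (auto simp: wuU_def)
    have w1: "wft T1 cosafe" "sound R1 T1" using u1 TM by (auto simp: usr_ok_def)
    have w2: "wft T2 cosafe" "sound R2 T2" using u2 TM by (auto simp: usr_ok_def)
    have "wft T cosafe" using refine_wft[OF merge_wft[OF w1(1) w2(1) TM(3)] TM(4)] .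
    moreover have "sound (WU weak R1 R2) T" using refine_sound[OF merge_sound2[OF w1(2) w2(2) TM(3)] TM(4)] .
    ultimately show "wft T cosafe \<and> sound (WU weak R1 R2) T" ..
  qed
next
  show "complete (WU weak R1 R2) (wuU weak TT1 TT2)"
    unfolding complete_def
  proof (intro allI)
    fix w m
    from u1 obtain T1 ps1 where A: "T1 \<in> set TT1" "okc w T1 ps1 0" "last ps1 = m" "\<forall>z \<le> m. R1 w z m \<longrightarrow> isem w (rd T1 ps1 z) z"
      unfolding usr_ok_def complete_def by blast
    from u2 obtain T2 ps2 where B: "T2 \<in> set TT2" "okc w T2 ps2 0" "last ps2 = m" "\<forall>z \<le> m. R2 w z m \<longrightarrow> isem w (rd T2 ps2 z) z"
      unfolding usr_ok_def complete_def by blast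
    have ne: "T1 \<noteq> []" "T2 \<noteq> []" using u1 u2 A B by (auto simp: usr_ok_def wft_def)
    from merge_exists[OF A(2) B(2) ne] A B obtain M ps where
      M: "M \<in> set (merge T1 T2)" "okc w M ps 0" "last ps = m" "\<forall>z. z \<le> last ps \<longrightarrow> rd M ps z = (rd T1 ps1 z, rd T2 ps2 z)"
      by auto
    have fr: "\<forall>z. 0 \<le> z \<and> z \<le> m \<longrightarrow> (R1 w z m \<longrightarrow> isem w (fst (rd M ps z)) z) \<and> (R2 w z m \<longrightarrow> isem w (snd (rd M ps z)) z)"
      using M(3,4) A(4) B(4) by auto
    have Mne: "M \<noteq> []" using merge_ne[OF M(1)] by simp
    from refine_complete[where Ra=R1 and Rb=R2 and weak=weak, OF M(2) Mne M(3) fr] obtain T' ps' where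
      T': "T' \<in> set (refine weak M)" "okc w T' ps' 0" "last ps' = m"
          "\<forall>z. 0 \<le> z \<and> z \<le> m \<longrightarrow> WU weak R1 R2 w z m \<longrightarrow> isem w (rd T' ps' z) z" by blast
    have "T' \<in> set (wuU weak TT1 TT2)" using A(1) B(1) M(1) T'(1) by (auto simp: wuU_def)
    thus "\<exists>T\<in>set (wuU weak TT1 TT2). \<exists>ps. okc w T ps 0 \<and> last ps = m \<and> (\<forall>z\<le>m. WU weak R1 R2 w z m \<longrightarrow> isem w (rd T ps z) z)"
      using T' by auto
  qed
qed

primrec usr :: "bool \<Rightarrow> 'a ltl \<Rightarrow> 'a tmpl list" where
  "usr b (Prop p) = [[(if b then Prop p else Neg (Prop p), tt, tt)]]"
| "usr b (Neg x) = usr (\<not> b) x"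
| "usr b (Or x y) = (if b then orU (usr b x) (usr b y) else andU (usr b x) (usr b y))"
| "usr b (And x y) = (if b then andU (usr b x) (usr b y) else orU (usr b x) (usr b y))"
| "usr b (Next x) = nextU (\<not> b) (usr b x)"
| "usr b (Until x y) = (if b then wuU False (usr True x) (usr True y)
     else wuU True (usr False y) (andU (usr False x) (usr False y)))"
| "usr b (Release x y) = (if b then wuU True (usr True y) (andU (usr True x) (usr True y))
     else wuU False (usr False x) (usr False y))"

lemma not_until_gen:
  fixes z m :: nat shows "(\<not>(\<exists>j. z \<le> j \<and> j \<le> m \<and> B j \<and> (\<forall>k. z \<le> k \<and> k < j \<longrightarrow> A k))) \<longleftrightarrow>
   ((\<exists>j. z \<le> j \<and> j \<le> m \<and> (\<not>A j \<and> \<not>B j) \<and> (\<forall>k. z \<le> k \<and> k < j \<longrightarrow> \<not>B k)) \<or> (\<forall>j. z \<le> j \<and> j \<le> m \<longrightarrow> \<not>B j))"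
proof
  assume h: "\<not>(\<exists>j. z \<le> j \<and> j \<le> m \<and> B j \<and> (\<forall>k. z \<le> k \<and> k < j \<longrightarrow> A k))"
  show "(\<exists>j. z \<le> j \<and> j \<le> m \<and> (\<not>A j \<and> \<not>B j) \<and> (\<forall>k. z \<le> k \<and> k < j \<longrightarrow> \<not>B k)) \<or> (\<forall>j. z \<le> j \<and> j \<le> m \<longrightarrow> \<not>B j)"
  proof (cases "\<exists>j. z \<le> j \<and> j \<le> m \<and> B j")
    case False thus ?thesis by blast
  next
    case True
    define j0 where "j0 = (LEAST j. z \<le> j \<and> j \<le> m \<and> B j)"
    have j0: "z \<le> j0" "j0 \<le> m" "B j0" using LeastI_ex[OF True] unfolding j0_def by auto
    have nb: "\<forall>k. z \<le> k \<and> k < j0 \<longrightarrow> \<not>B k"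
    proof (intro allI impI notI)
      fix k assume k: "z \<le> k \<and> k < j0" and "B k"
      hence "z \<le> k \<and> k \<le> m \<and> B k" using j0 by auto
      hence "j0 \<le> k" unfolding j0_def by (rule Least_le)
      thus False using k by simp
    qed
    from h j0 obtain k where k: "z \<le> k" "k < j0" "\<not> A k" by blast
    have "\<not> B k" using nb k by blast
    moreover have "\<forall>k'. z \<le> k' \<and> k' < k \<longrightarrow> \<not>B k'" using nb k by auto
    ultimately show ?thesis using k j0 by (intro disjI1 exI[of _ k]) auto
  qed
next
  assume "(\<exists>j. z \<le> j \<and> j \<le> m \<and> (\<not>A j \<and> \<not>B j) \<and> (\<forall>k. z \<le> k \<and> k < j \<longrightarrow> \<not>B k)) \<or> (\<forall>j. z \<le> j \<and> j \<le> m \<longrightarrow> \<not>B j)"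
  thus "\<not>(\<exists>j. z \<le> j \<and> j \<le> m \<and> B j \<and> (\<forall>k. z \<le> k \<and> k < j \<longrightarrow> A k))"
  proof
    assume "\<exists>j. z \<le> j \<and> j \<le> m \<and> (\<not>A j \<and> \<not>B j) \<and> (\<forall>k. z \<le> k \<and> k < j \<longrightarrow> \<not>B k)"
    then obtain j where j: "z \<le> j" "j \<le> m" "\<not>A j" "\<not>B j" "\<forall>k. z \<le> k \<and> k < j \<longrightarrow> \<not>B k" by blast
    show ?thesis
    proof
      assume "\<exists>j. z \<le> j \<and> j \<le> m \<and> B j \<and> (\<forall>k. z \<le> k \<and> k < j \<longrightarrow> A k)"
      then obtain j' where j': "z \<le> j'" "j' \<le> m" "B j'" "\<forall>k. z \<le> k \<and> k < j' \<longrightarrow> A k" by blast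
      consider "j' < j" | "j' = j" | "j < j'" by linarith
      thus False
      proof cases
        case 1 thus False using j j' by blast
      next
        case 2 thus False using j j' by blast
      next
        case 3 thus False using j j' by blast
      qed
    qed
  qed blast
qed

lemma not_release_gen:
  fixes z m :: nat shows "(\<not>((\<forall>j. z \<le> j \<and> j \<le> m \<longrightarrow> B j) \<or> (\<exists>j. z \<le> j \<and> j \<le> m \<and> A j \<and> B j \<and> (\<forall>k. z \<le> k \<and> k < j \<longrightarrow> B k)))) \<longleftrightarrow>
   (\<exists>j. z \<le> j \<and> j \<le> m \<and> \<not>B j \<and> (\<forall>k. z \<le> k \<and> k < j \<longrightarrow> \<not>A k))"
proof
  assume h: "\<not>((\<forall>j. z \<le> j \<and> j \<le> m \<longrightarrow> B j) \<or> (\<exists>j. z \<le> j \<and> j \<le> m \<and> A j \<and> B j \<and> (\<forall>k. z \<le> k \<and> k < j \<longrightarrow> B k)))"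
  hence ex: "\<exists>j. z \<le> j \<and> j \<le> m \<and> \<not> B j" by blast
  define j0 where "j0 = (LEAST j. z \<le> j \<and> j \<le> m \<and> \<not> B j)"
  have j0: "z \<le> j0" "j0 \<le> m" "\<not> B j0" using LeastI_ex[OF ex] unfolding j0_def by auto
  have b: "\<forall>k. z \<le> k \<and> k < j0 \<longrightarrow> B k"
  proof (intro allI impI)
    fix k assume k: "z \<le> k \<and> k < j0"
    show "B k"
    proof (rule ccontr)
      assume "\<not> B k"
      hence "z \<le> k \<and> k \<le> m \<and> \<not> B k" using j0 k by auto
      hence "j0 \<le> k" unfolding j0_def by (rule Least_le)
      thus False using k by simp
    qed
  qed
  have "\<forall>k. z \<le> k \<and> k < j0 \<longrightarrow> \<not> A k"
  proof (intro allI impI)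
    fix k assume k: "z \<le> k \<and> k < j0"
    show "\<not> A k"
    proof
      assume "A k"
      moreover have "B k" "\<forall>k'. z \<le> k' \<and> k' < k \<longrightarrow> B k'" using b k by auto
      ultimately show False using h k j0 by auto
    qed
  qed
  thus "\<exists>j. z \<le> j \<and> j \<le> m \<and> \<not>B j \<and> (\<forall>k. z \<le> k \<and> k < j \<longrightarrow> \<not>A k)" using j0 by blast
next
  assume "\<exists>j. z \<le> j \<and> j \<le> m \<and> \<not>B j \<and> (\<forall>k. z \<le> k \<and> k < j \<longrightarrow> \<not>A k)"
  then obtain j where j: "z \<le> j" "j \<le> m" "\<not> B j" "\<forall>k. z \<le> k \<and> k < j \<longrightarrow> \<not>A k" by blast
  show "\<not>((\<forall>j. z \<le> j \<and> j \<le> m \<longrightarrow> B j) \<or> (\<exists>j. z \<le> j \<and> j \<le> m \<and> A j \<and> B j \<and> (\<forall>k. z \<le> k \<and> k < j \<longrightarrow> B k)))"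
  proof
    assume "(\<forall>j. z \<le> j \<and> j \<le> m \<longrightarrow> B j) \<or> (\<exists>j. z \<le> j \<and> j \<le> m \<and> A j \<and> B j \<and> (\<forall>k. z \<le> k \<and> k < j \<longrightarrow> B k))"
    thus False
    proof
      assume "\<forall>j. z \<le> j \<and> j \<le> m \<longrightarrow> B j" thus False using j by blast
    next
      assume "\<exists>j. z \<le> j \<and> j \<le> m \<and> A j \<and> B j \<and> (\<forall>k. z \<le> k \<and> k < j \<longrightarrow> B k)"
      then obtain j' where j': "z \<le> j'" "j' \<le> m" "A j'" "B j'" "\<forall>k. z \<le> k \<and> k < j' \<longrightarrow> B k" by blast
      consider "j' < j" | "j' = j" | "j < j'" by linarith
      thus False
      proof cases
        case 1 thus False using j j' by blast
      next
        case 2 thus False using j j' by blast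
      next
        case 3 thus False using j j' by blast
      qed
    qed
  qed
qed

lemma usr_main: "usr_ok (\<lambda>w z m. fsem w m \<psi> z = b) (usr b \<psi>)"
proof (induction \<psi> arbitrary: b)
  case (Prop p)
  show ?case
  proof (cases b)
    case True
    show ?thesis using usr_lit[of "Prop p"] True by (auto intro: usr_ok_cong)
  next
    case False
    show ?thesis using usr_lit[of "Neg (Prop p)"] False by (auto intro: usr_ok_cong)
  qed
next
  case (Neg x)
  show ?case using Neg[of "\<not> b"] by (auto intro: usr_ok_cong)
next
  case (Or x y)
  show ?case
  proof (cases b)
    case True thus ?thesis using usr_or[OF Or.IH(1)[of b] Or.IH(2)[of b]] by (auto intro: usr_ok_cong)
  next
    case False thus ?thesis using usr_and[OF Or.IH(1)[of b] Or.IH(2)[of b]] by (auto intro: usr_ok_cong)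
  qed
next
  case (And x y)
  show ?case
  proof (cases b)
    case True thus ?thesis using usr_and[OF And.IH(1)[of b] And.IH(2)[of b]] by (auto intro: usr_ok_cong)
  next
    case False thus ?thesis using usr_or[OF And.IH(1)[of b] And.IH(2)[of b]] by (auto intro: usr_ok_cong)
  qed
next
  case (Next x)
  have u: "usr_ok (\<lambda>w z m. (z < m \<and> fsem w m x (Suc z) = b) \<or> ((\<not> b) \<and> z = m)) (nextU (\<not> b) (usr b x))"
    using usr_next[OF Next.IH[of b]] .
  show ?case unfolding usr.simps
    by (rule usr_ok_cong[OF u]) auto
next
  case (Until x y)
  show ?case
  proof (cases b)
    case True
    have u: "usr_ok (WU False (\<lambda>w z m. fsem w m x z = True) (\<lambda>w z m. fsem w m y z = True)) (wuU False (usr True x) (usr True y))"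
      using usr_wu[OF Until.IH(1)[of True] Until.IH(2)[of True]] .
    have eq: "\<And>w z m. z \<le> m \<Longrightarrow> WU False (\<lambda>w z m. fsem w m x z = True) (\<lambda>w z m. fsem w m y z = True) w z m
        = (fsem w m (Until x y) z = True)"
      unfolding WU_def by auto
    show ?thesis using True usr_ok_cong[OF u eq] by simp
  next
    case False
    have u: "usr_ok (WU True (\<lambda>w z m. fsem w m y z = False) (\<lambda>w z m. fsem w m x z = False \<and> fsem w m y z = False))
        (wuU True (usr False y) (andU (usr False x) (usr False y)))"
      using usr_wu[OF Until.IH(2)[of False] usr_and[OF Until.IH(1)[of False] Until.IH(2)[of False]]] .
    have eq: "\<And>w z m. z \<le> m \<Longrightarrow> WU True (\<lambda>w z m. fsem w m y z = False) (\<lambda>w z m. fsem w m x z = False \<and> fsem w m y z = False) w z m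
        = (fsem w m (Until x y) z = False)"
    proof -
      fix w z m
      show "WU True (\<lambda>w z m. fsem w m y z = False) (\<lambda>w z m. fsem w m x z = False \<and> fsem w m y z = False) w z m
        = (fsem w m (Until x y) z = False)"
        unfolding WU_def using not_until_gen[of z m "\<lambda>k. fsem w m y k" "\<lambda>k. fsem w m x k"] by simp
    qed
    show ?thesis using False usr_ok_cong[OF u eq] by simp
  qed
next
  case (Release x y)
  show ?case
  proof (cases b)
    case True
    have u: "usr_ok (WU True (\<lambda>w z m. fsem w m y z = True) (\<lambda>w z m. fsem w m x z = True \<and> fsem w m y z = True))
        (wuU True (usr True y) (andU (usr True x) (usr True y)))"
      using usr_wu[OF Release.IH(2)[of True] usr_and[OF Release.IH(1)[of True] Release.IH(2)[of True]]] .
    have eq: "\<And>w z m. z \<le> m \<Longrightarrow> WU True (\<lambda>w z m. fsem w m y z = True) (\<lambda>w z m. fsem w m x z = True \<and> fsem w m y z = True) w z m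
        = (fsem w m (Release x y) z = True)"
      unfolding WU_def by auto
    show ?thesis using True usr_ok_cong[OF u eq] by simp
  next
    case False
    have u: "usr_ok (WU False (\<lambda>w z m. fsem w m x z = False) (\<lambda>w z m. fsem w m y z = False))
        (wuU False (usr False x) (usr False y))"
      using usr_wu[OF Release.IH(1)[of False] Release.IH(2)[of False]] .
    have eq: "\<And>w z m. z \<le> m \<Longrightarrow> WU False (\<lambda>w z m. fsem w m x z = False) (\<lambda>w z m. fsem w m y z = False) w z m
        = (fsem w m (Release x y) z = False)"
    proof -
      fix w z m
      show "WU False (\<lambda>w z m. fsem w m x z = False) (\<lambda>w z m. fsem w m y z = False) w z m
        = (fsem w m (Release x y) z = False)"
        unfolding WU_def using not_release_gen[of z m "\<lambda>k. fsem w m y k" "\<lambda>k. fsem w m x k"] by simp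
    qed
    show ?thesis using False usr_ok_cong[OF u eq] by simp
  qed
qed

lemma word_main: "isem w (ext_formula (usr True \<psi>)) z \<longleftrightarrow> (\<exists>m \<ge> z. fsem w m \<psi> z)"
  using ext_formula_sem[OF usr_main[of \<psi> True]] by simp

lemma word_cosafe: "cosafe (ext_formula (usr True \<psi>))"
  using ext_formula_cosafe[OF usr_main[of \<psi> True]] .

definition extn :: "nat list set \<Rightarrow> nat list \<Rightarrow> nat list" where
  "extn D v = v @ [SOME k. v @ [k] \<in> D]"

lemma extn_in: "is_tree D \<Longrightarrow> v \<in> D \<Longrightarrow> extn D v \<in> D"
  unfolding extn_def is_tree_def by (metis (mono_tags, lifting) Collect_empty_eq someI_ex)

lemma extn_pow_in: "is_tree D \<Longrightarrow> v \<in> D \<Longrightarrow> (extn D ^^ j) v \<in> D"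
  by (induction j) (auto intro: extn_in)

lemma root_path_inf_fin: "root_path D \<pi> \<infinity> \<Longrightarrow> root_path D \<pi> (enat (Suc m))"
  unfolding root_path_def by (auto simp: one_enat_def)

theorem lemma3p6:
  fixes \<psi> :: "('a::finite) ltl"
  shows "\<exists>\<psi>'. cosafe \<psi>' \<and>
           (\<forall>D (lab :: nat list \<Rightarrow> 'a set) u. is_tree D \<and> u \<in> D \<longrightarrow>
              (EF_sat D lab u \<psi> \<longleftrightarrow> E_sat D lab u \<psi>'))"
proof (intro exI conjI allI impI)
  show "cosafe (ext_formula (usr True \<psi>))" by (rule word_cosafe)
  fix D and lab :: "nat list \<Rightarrow> 'a set" and u
  assume Du: "is_tree D \<and> u \<in> D"
  show "EF_sat D lab u \<psi> \<longleftrightarrow> E_sat D lab u (ext_formula (usr True \<psi>))"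
  proof
    assume "EF_sat D lab u \<psi>"
    then obtain \<pi> n i where rp: "root_path D \<pi> (enat n)" and i: "i < n" "\<pi> i = u" and h: "holds lab \<pi> (enat n) \<psi> i"
      unfolding EF_sat_def by blast
    define m where "m = n - 1"
    have n: "n = Suc m" using i unfolding m_def by simp
    define \<pi>' where "\<pi>' = (\<lambda>k. if k \<le> m then \<pi> k else (extn D ^^ (k - m)) (\<pi> m))"
    have \<pi>m: "\<pi> m \<in> D" using rp n unfolding root_path_def by simp
    have rp': "root_path D \<pi>' \<infinity>"
      unfolding root_path_def
    proof (intro conjI allI impI)
      show "1 \<le> (\<infinity>::enat)" by simp
      show "\<pi>' 0 = []" using rp unfolding root_path_def \<pi>'_def by simp
    next
      fix k
      show "\<pi>' k \<in> D"
      proof (cases "k \<le> m")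
        case True thus ?thesis using rp n unfolding root_path_def \<pi>'_def by simp
      next
        case False thus ?thesis using extn_pow_in[OF conjunct1[OF Du] \<pi>m] unfolding \<pi>'_def by simp
      qed
    next
      fix k
      show "\<exists>x. \<pi>' (Suc k) = \<pi>' k @ [x]"
      proof (cases "Suc k \<le> m")
        case True thus ?thesis using rp n unfolding root_path_def \<pi>'_def by simp
      next
        case False
        hence "Suc k - m = Suc (k - m)" by simp
        hence "\<pi>' (Suc k) = extn D (\<pi>' k)" using False unfolding \<pi>'_def
          by (cases "k = m") (auto simp: not_le)
        thus ?thesis unfolding extn_def by blast
      qed
    qed
    have "fsem (\<lambda>k. lab (\<pi> k)) m \<psi> i" using h holds_fin[of lab \<pi> m \<psi> i] n by simp
    moreover have "fsem (\<lambda>k. lab (\<pi> k)) m \<psi> i = fsem (\<lambda>k. lab (\<pi>' k)) m \<psi> i"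
      by (rule fsem_cong) (use i n in \<open>auto simp: \<pi>'_def\<close>)
    ultimately have "fsem (\<lambda>k. lab (\<pi>' k)) m \<psi> i" by simp
    moreover have "i \<le> m" using i n by simp
    ultimately have "isem (\<lambda>k. lab (\<pi>' k)) (ext_formula (usr True \<psi>)) i"
      using word_main[of "\<lambda>k. lab (\<pi>' k)" \<psi> i] by blast
    hence "holds lab \<pi>' \<infinity> (ext_formula (usr True \<psi>)) i" using holds_inf by metis
    moreover have "\<pi>' i = u" using i n unfolding \<pi>'_def by simp
    ultimately show "E_sat D lab u (ext_formula (usr True \<psi>))" using rp' unfolding E_sat_def by blast
  next
    assume "E_sat D lab u (ext_formula (usr True \<psi>))"
    then obtain \<pi> i where rp: "root_path D \<pi> \<infinity>" and i: "\<pi> i = u" and h: "holds lab \<pi> \<infinity> (ext_formula (usr True \<psi>)) i"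
      unfolding E_sat_def by blast
    have "isem (\<lambda>k. lab (\<pi> k)) (ext_formula (usr True \<psi>)) i" using h holds_inf by metis
    then obtain m where m: "i \<le> m" "fsem (\<lambda>k. lab (\<pi> k)) m \<psi> i" using word_main by blast
    have "holds lab \<pi> (enat (Suc m)) \<psi> i" using m holds_fin by metis
    moreover have "root_path D \<pi> (enat (Suc m))" using root_path_inf_fin[OF rp] .
    moreover have "i < Suc m" using m by simp
    ultimately show "EF_sat D lab u \<psi>" using i unfolding EF_sat_def by blast
  qed
qed

end
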